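(* Assume (H0), (H1), (H2) hold, $\kappa>0$, and $g'(1)(\mu+\beta)-\beta\rho\neq0$. For $n\in\mathbb{N}$ with $C_n(G)\neq0$ define $$\widehat\alpha_n=\frac{-(\rho+\mu+\beta)^2}{\kappa[g'(1)(\mu+\beta)-\beta\rho]\,C_n(G)}\left(d-\frac{f'(1)}{l_n}\right),$$ and $\widehat\Sigma^+=\{n:\widehat\alpha_n>0\}$, $\widehat\Sigma^-=\{n:\widehat\alpha_n<0\}$, $\widehat\alpha_r=\min_{n\in\widehat\Sigma^+}\widehat\alpha_n$, $\widehat\alpha_l=\max_{n\in\widehat\Sigma^-}\widehat\alpha_n$ (with $\min\emptyset=+\infty$, $\max\emptyset=-\infty$). Then for system (1.8b): (i) the constant steady state $\widehat U_*=(1,\rho\kappa/(\rho+\mu+\beta))$ is locally asymptotically stable if $\widehat\alpha_l<\alpha<\widehat\alpha_r$; (ii) $\widehat U_*$ is unstable if $\alpha<\widehat\alpha_l$ or $\alpha>\widehat\alpha_r$.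
   Context: $L>0$, $d>0$, $\alpha\in\mathbb{R}$, $\mu,\beta\ge0$. Convolution $(G*z)(x)=\frac{1}{2L}\int_{-L}^{L}G(x-y)z(y)\,dy$, $\overline{k}=G*k$. (H0): $G\ge0$, $G\in L^1_{per}(-L,L)$, $G$ even, $(2L)^{-1}\int_{-L}^LG=1$. (H1): $f\in C^3([0,\infty))$, $f(0)=f(1)=0$, $f'(0)>0$, $f'(1)<0$, $f>0$ on $(0,1)$, $f<0$ on $(1,\infty)$. (H2): $g\in C^3([0,\infty))$, $g>0$ on $(0,\infty)$, $g(0)=0$, $g(1)=\rho>0$. $l_n=n^2\pi^2/L^2$; $C_n(G)=\frac{1}{2L}\int_{-L}^{L}\cos(n\pi y/L)G(y)\,dy$. System (1.8b): $u_t=du_{xx}+\alpha(u\overline{k}_x)_x+f(u)$, $k_t=g(u)(\kappa-k)-(\mu+\beta u)k$ on $(-L,L)$ with periodic boundary conditions. Stability/instability is that determined by the linearization at $\widehat U_*$ on $H^2_{per}\times L^2_{per}$. *)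

theory Defs
  imports "HOL-Analysis.Analysis"
begin

definition C3_on :: "real set \<Rightarrow> (real \<Rightarrow> real) \<Rightarrow> bool" where
  "C3_on S h \<longleftrightarrow> (\<exists>h1 h2 h3.
     (\<forall>x\<in>S. (h has_real_derivative h1 x) (at x within S)) \<and>
     (\<forall>x\<in>S. (h1 has_real_derivative h2 x) (at x within S)) \<and>
     (\<forall>x\<in>S. (h2 has_real_derivative h3 x) (at x within S)) \<and>
     continuous_on S h3)"

definition H0 :: "real \<Rightarrow> (real \<Rightarrow> real) \<Rightarrow> bool" where
  "H0 L G \<longleftrightarrow> (\<forall>x. G x \<ge> 0) \<and> (\<forall>x. G (x + 2*L) = G x) \<and>
     G integrable_on {-L..L} \<and> (\<forall>x. G (-x) = G x) \<and>
     integral {-L..L} G / (2*L) = 1"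

definition H1 :: "(real \<Rightarrow> real) \<Rightarrow> bool" where
  "H1 f \<longleftrightarrow> C3_on {0..} f \<and> f 0 = 0 \<and> f 1 = 0 \<and> deriv f 0 > 0 \<and> deriv f 1 < 0 \<and>
     (\<forall>x. 0 < x \<and> x < 1 \<longrightarrow> f x > 0) \<and> (\<forall>x. x > 1 \<longrightarrow> f x < 0)"

definition H2 :: "(real \<Rightarrow> real) \<Rightarrow> real \<Rightarrow> bool" where
  "H2 g \<rho> \<longleftrightarrow> C3_on {0..} g \<and> (\<forall>x. x > 0 \<longrightarrow> g x > 0) \<and> g 0 = 0 \<and> g 1 = \<rho> \<and> \<rho> > 0"

definition conv :: "real \<Rightarrow> (real \<Rightarrow> real) \<Rightarrow> (real \<Rightarrow> complex) \<Rightarrow> real \<Rightarrow> complex" where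
  "conv L G z x = integral {-L..L} (\<lambda>y. complex_of_real (G (x - y)) * z y) / complex_of_real (2*L)"

definition lam :: "real \<Rightarrow> nat \<Rightarrow> real" where
  "lam L n = (real n)^2 * pi^2 / L^2"

definition Cn :: "real \<Rightarrow> (real \<Rightarrow> real) \<Rightarrow> nat \<Rightarrow> real" where
  "Cn L G n = integral {-L..L} (\<lambda>y. cos (real n * pi * y / L) * G y) / (2*L)"

definition periodic :: "real \<Rightarrow> (real \<Rightarrow> 'a) \<Rightarrow> bool" where
  "periodic L z \<longleftrightarrow> (\<forall>x. z (x + 2*L) = z x)"

definition kstar :: "real \<Rightarrow> real \<Rightarrow> real \<Rightarrow> real \<Rightarrow> real" where
  "kstar \<rho> \<kappa> \<mu> \<beta> = \<rho> * \<kappa> / (\<rho> + \<mu> + \<beta>)"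

text \<open>Eigenvalues of the linearization of (1.8b) at (1, k*):
  (U,K) \<mapsto> ( d U'' + \<alpha> (G*K)'' + f'(1) U ,
             [g'(1)(\<kappa> - k*) - \<beta> k*] U - (g(1) + \<mu> + \<beta>) K ),
  with 2L-periodic (smooth) eigenfunctions.\<close>
definition lin_eigenvalue ::
  "real \<Rightarrow> real \<Rightarrow> real \<Rightarrow> real \<Rightarrow> real \<Rightarrow> real \<Rightarrow> (real \<Rightarrow> real) \<Rightarrow> (real \<Rightarrow> real)
   \<Rightarrow> (real \<Rightarrow> real) \<Rightarrow> complex \<Rightarrow> bool" where
  "lin_eigenvalue L d \<alpha> \<mu> \<beta> \<kappa> G f g ev \<longleftrightarrow>
     (let ks = kstar (g 1) \<kappa> \<mu> \<beta> in
     (\<exists>\<phi> \<phi>1 \<phi>2 \<psi> Hc1 Hc2.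
        (\<phi> \<noteq> (\<lambda>_. 0) \<or> \<psi> \<noteq> (\<lambda>_. 0)) \<and> periodic L \<phi> \<and> periodic L \<psi> \<and>
        continuous_on UNIV \<psi> \<and>
        (\<forall>x. (\<phi> has_vector_derivative \<phi>1 x) (at x)) \<and>
        (\<forall>x. (\<phi>1 has_vector_derivative \<phi>2 x) (at x)) \<and>
        (\<forall>x. (conv L G \<psi> has_vector_derivative Hc1 x) (at x)) \<and>
        (\<forall>x. (Hc1 has_vector_derivative Hc2 x) (at x)) \<and>
        (\<forall>x. of_real d * \<phi>2 x + of_real \<alpha> * Hc2 x + of_real (deriv f 1) * \<phi> x = ev * \<phi> x) \<and>
        (\<forall>x. of_real (deriv g 1 * (\<kappa> - ks) - \<beta> * ks) * \<phi> x
               - of_real (g 1 + \<mu> + \<beta>) * \<psi> x = ev * \<psi> x)))"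

definition lin_stable where
  "lin_stable L d \<alpha> \<mu> \<beta> \<kappa> G f g \<longleftrightarrow>
     (\<exists>\<omega>>0. \<forall>ev. lin_eigenvalue L d \<alpha> \<mu> \<beta> \<kappa> G f g ev \<longrightarrow> Re ev \<le> -\<omega>)"

definition lin_unstable where
  "lin_unstable L d \<alpha> \<mu> \<beta> \<kappa> G f g \<longleftrightarrow>
     (\<exists>ev. lin_eigenvalue L d \<alpha> \<mu> \<beta> \<kappa> G f g ev \<and> Re ev > 0)"

definition alpha_hat where
  "alpha_hat L d \<mu> \<beta> \<kappa> \<rho> G f g n =
     (- ((\<rho> + \<mu> + \<beta>) ^ 2)) / (\<kappa> * (deriv g 1 * (\<mu> + \<beta>) - \<beta> * \<rho>) * Cn L G n)
       * (d - deriv f 1 / lam L n)"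

definition Sigma_plus where
  "Sigma_plus L d \<mu> \<beta> \<kappa> \<rho> G f g =
     {n::nat. n \<ge> 1 \<and> Cn L G n \<noteq> 0 \<and> alpha_hat L d \<mu> \<beta> \<kappa> \<rho> G f g n > 0}"

definition Sigma_minus where
  "Sigma_minus L d \<mu> \<beta> \<kappa> \<rho> G f g =
     {n::nat. n \<ge> 1 \<and> Cn L G n \<noteq> 0 \<and> alpha_hat L d \<mu> \<beta> \<kappa> \<rho> G f g n < 0}"

definition alpha_r :: "real \<Rightarrow> real \<Rightarrow> real \<Rightarrow> real \<Rightarrow> real \<Rightarrow> real \<Rightarrow> (real \<Rightarrow> real)
   \<Rightarrow> (real \<Rightarrow> real) \<Rightarrow> (real \<Rightarrow> real) \<Rightarrow> ereal" where
  "alpha_r L d \<mu> \<beta> \<kappa> \<rho> G f g =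
     (INF n\<in>Sigma_plus L d \<mu> \<beta> \<kappa> \<rho> G f g. ereal (alpha_hat L d \<mu> \<beta> \<kappa> \<rho> G f g n))"

definition alpha_l :: "real \<Rightarrow> real \<Rightarrow> real \<Rightarrow> real \<Rightarrow> real \<Rightarrow> real \<Rightarrow> (real \<Rightarrow> real)
   \<Rightarrow> (real \<Rightarrow> real) \<Rightarrow> (real \<Rightarrow> real) \<Rightarrow> ereal" where
  "alpha_l L d \<mu> \<beta> \<kappa> \<rho> G f g =
     (SUP n\<in>Sigma_minus L d \<mu> \<beta> \<kappa> \<rho> G f g. ereal (alpha_hat L d \<mu> \<beta> \<kappa> \<rho> G f g n))"

end

theory Submission
  imports Defs
begin

definition wk :: "real \<Rightarrow> int \<Rightarrow> complex" where
  "wk L k = \<i> * complex_of_real (real_of_int k * pi / L)"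

definition ek :: "real \<Rightarrow> int \<Rightarrow> real \<Rightarrow> complex" where
  "ek L k x = exp (x *\<^sub>R wk L k)"

lemma wk_add: "wk L (j + k) = wk L j + wk L k"
  unfolding wk_def by (simp add: algebra_simps add_divide_distrib)

lemma ek_mult: "ek L j x * ek L k x = ek L (j + k) x"
  unfolding ek_def by (simp add: wk_add exp_add scaleR_add_right)

lemma ek_norm[simp]: "norm (ek L k x) = 1"
  unfolding ek_def wk_def by (simp add: scaleR_conv_of_real)

lemma ek_nz[simp]: "ek L k x \<noteq> 0"
  unfolding ek_def by simp

lemma ek_periodic: assumes "L \<noteq> 0" shows "ek L k (x + 2*L) = ek L k x"
proof -
  have "(x + 2*L) *\<^sub>R wk L k = x *\<^sub>R wk L k + (2 * of_int k * pi) * \<i>"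
    using assms unfolding wk_def by (simp add: scaleR_conv_of_real field_simps)
  moreover have "exp ((2 * of_int k * pi) * \<i>) = 1"
    by (rule exp_integer_2pi) simp
  ultimately show ?thesis unfolding ek_def by (simp add: exp_add)
qed

lemma ek_deriv: "(ek L k has_vector_derivative wk L k * ek L k x) (at x within S)"
  unfolding ek_def using exp_scaleR_has_vector_derivative_right[of "wk L k" x S]
  by (simp add: mult.commute)

lemma ek_cont[continuous_intros]: "continuous_on S (ek L k)"
  unfolding ek_def by (intro continuous_intros)

lemma ek_zero[simp]: "ek L 0 x = 1"
  unfolding ek_def wk_def by simp

lemma ek_neg: "ek L (-k) x = cnj (ek L k x)"
proof -
  have "cnj (x *\<^sub>R wk L k) = x *\<^sub>R wk L (-k)"
    unfolding wk_def by (simp add: scaleR_conv_of_real)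
  then show ?thesis unfolding ek_def by (metis exp_cnj)
qed

lemma wk_sq: "wk L k * wk L k = - of_real ((real_of_int k)^2 * pi^2 / L^2)"
  unfolding wk_def by (simp add: power2_eq_square algebra_simps)


lemma periodic_nat: assumes "periodic L h" shows "h (x + real n * (2*L)) = h x"
proof (induction n arbitrary: x)
  case 0 then show ?case by simp
next
  case (Suc n)
  have "h (x + real (Suc n) * (2*L)) = h ((x + real n * (2*L)) + 2*L)"
    by (simp add: algebra_simps)
  also have "\<dots> = h (x + real n * (2*L))" using assms unfolding periodic_def by blast
  finally show ?case using Suc by simp
qed

lemma periodic_int: assumes "periodic L h" shows "h (x + real_of_int m * (2*L)) = h x"
proof (cases m)
  case (nonneg n) then show ?thesis using periodic_nat[OF assms] by simp
next
  case (neg n)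
  have "real_of_int m = - real (Suc n)" using neg by simp
  have e1: "(x + real_of_int m * (2*L)) + real (Suc n) * (2*L) = x + (real_of_int m + real (Suc n)) * (2*L)"
    by (simp add: algebra_simps)
  have "h x = h ((x + real_of_int m * (2*L)) + real (Suc n) * (2*L))"
    unfolding e1 using \<open>real_of_int m = - real (Suc n)\<close> by simp
  also have "\<dots> = h (x + real_of_int m * (2*L))" by (rule periodic_nat[OF assms])
  finally show ?thesis by simp
qed

lemma periodic_reduce:
  assumes "L > 0" "periodic L h"
  shows "\<exists>t\<in>{-L..L}. h x = h t"
proof -
  define m where "m = floor ((x + L) / (2*L))"
  define t where "t = x - real_of_int m * (2*L)"
  have "real_of_int m \<le> (x + L) / (2*L)" "(x + L) / (2*L) < real_of_int m + 1"
    unfolding m_def by linarith+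
  then have "real_of_int m * (2*L) \<le> x + L" "x + L < (real_of_int m + 1) * (2*L)"
    using assms(1) by (simp_all add: field_simps)
  then have "t \<in> {-L..L}" unfolding t_def by (auto simp: algebra_simps)
  moreover have "h x = h t" using periodic_int[OF assms(2), of t m] unfolding t_def by simp
  ultimately show ?thesis by blast
qed

lemma periodic_shift_integral:
  fixes h :: "real \<Rightarrow> 'a::banach"
  assumes L: "L > 0" and per: "periodic L h" and int: "h integrable_on {-L..L}"
  shows "(h has_integral integral {-L..L} h) {a..a+2*L}"
proof -
  let ?I = "integral {-L..L} h"
  have step1: "(h has_integral ?I) {t..t+2*L}" if t: "t \<in> {-L..L}" for t
  proof -
    have i1: "(h has_integral integral {-L..t} h) {-L..t}"
      using integrable_subinterval_real[OF int, of "-L" t] t by (simp add: integrable_integral)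
    have i2: "(h has_integral integral {t..L} h) {t..L}"
      using integrable_subinterval_real[OF int, of t L] t by (simp add: integrable_integral)
    have sum: "integral {-L..t} h + integral {t..L} h = ?I"
      using Henstock_Kurzweil_Integration.integral_combine[OF _ _ int, of t] t by simp
    have hc: "h \<circ> (+) (2*L) = h" using per unfolding periodic_def by (auto simp: add.commute)
    have i1': "(h has_integral integral {-L..t} h) {L..t+2*L}"
      using has_integral_shift_Icc_real[of h "2*L" "integral {-L..t} h" "-L" t] i1 hc
      by (simp add: algebra_simps)
    have "(h has_integral (integral {t..L} h + integral {-L..t} h)) {t..t+2*L}"
      by (rule has_integral_combine[OF _ _ i2 i1']) (use t in auto)
    then show ?thesis using sum by (simp add: add.commute)
  qed
  define m where "m = floor ((a + L) / (2*L))"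
  define t where "t = a - real_of_int m * (2*L)"
  have "real_of_int m \<le> (a + L) / (2*L)" "(a + L) / (2*L) < real_of_int m + 1"
    unfolding m_def by linarith+
  then have "real_of_int m * (2*L) \<le> a + L" "a + L < (real_of_int m + 1) * (2*L)"
    using L by (simp_all add: field_simps)
  then have t: "t \<in> {-L..L}" unfolding t_def by (auto simp: algebra_simps)
  have hc: "h \<circ> (+) (real_of_int m * (2*L)) = h"
    using periodic_int[OF per] by (auto simp: add.commute)
  show ?thesis
    using has_integral_shift_Icc_real[of h "real_of_int m * (2*L)" ?I t "t+2*L"] step1[OF t] hc
    unfolding t_def by (simp add: algebra_simps)
qed

lemma G_shift_integral:
  assumes L: "L > 0" and H0: "H0 L G"
  shows "((\<lambda>y. G (x - y)) has_integral (2*L)) {-L..L}"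
proof -
  have per: "periodic L G" using H0 unfolding H0_def periodic_def by blast
  have int: "G integrable_on {-L..L}" and mean: "integral {-L..L} G / (2*L) = 1"
    using H0 unfolding H0_def by auto
  have I: "integral {-L..L} G = 2*L" using mean L by (simp add: field_simps)
  have "(G has_integral (2*L)) {(x-L)..(x-L)+2*L}"
    using periodic_shift_integral[OF L per int, of "x-L"] I by simp
  moreover have "(x-L)+2*L = x+L" by simp
  ultimately have "(G has_integral (2*L)) {x-L..x+L}" by metis
  then have "((\<lambda>u. G (-u)) has_integral (2*L)) {-(x+L)..-(x-L)}"
    using has_integral_reflect_real[of G "2*L" "x-L" "x+L"] by blast
  moreover have "-(x+L) = -L-x" "-(x-L) = L-x" by simp_all
  ultimately have "((\<lambda>u. G (-u)) has_integral (2*L)) {-L-x..L-x}" by metis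
  then have "(((\<lambda>u. G (-u)) \<circ> (+) (-x)) has_integral (2*L)) {-L..L}"
    using has_integral_shift_Icc_real[of "\<lambda>u. G (-u)" "-x" "2*L" "-L" L] by (simp add: add.commute)
  then show ?thesis by (simp add: o_def)
qed

lemma G_shift_absint:
  assumes L: "L > 0" and H0: "H0 L G"
  shows "(\<lambda>y. G (x - y)) absolutely_integrable_on {-L..L}"
  apply (rule nonnegative_absolutely_integrable_1)
  using G_shift_integral[OF assms, of x] H0 unfolding H0_def by auto


lemma bilinear_ofreal_mult: "bilinear (\<lambda>(z::complex) (r::real). complex_of_real r * z)"
  by (auto simp: bilinear_def linear_iff algebra_simps scaleR_conv_of_real)

lemma absint_mult_cont:
  fixes g :: "real \<Rightarrow> real" and \<psi> :: "real \<Rightarrow> complex"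
  assumes g: "g absolutely_integrable_on {a..b}" and c: "continuous_on {a..b} \<psi>"
  shows "(\<lambda>y. complex_of_real (g y) * \<psi> y) absolutely_integrable_on {a..b}"
proof -
  have "(\<lambda>y. (\<lambda>(z::complex) (r::real). complex_of_real r * z) (\<psi> y) (g y)) absolutely_integrable_on {a..b}"
  proof (rule absolutely_integrable_bounded_measurable_product[OF bilinear_ofreal_mult _ _ _ g])
    show "\<psi> \<in> borel_measurable (lebesgue_on {a..b})"
      by (rule continuous_imp_measurable_on_sets_lebesgue[OF c]) simp
    show "{a..b} \<in> sets lebesgue" by simp
    show "bounded (\<psi> ` {a..b})"
      by (rule compact_imp_bounded, rule compact_continuous_image[OF c]) simp
  qed
  then show ?thesis by simp
qed

lemma absint_mult_cont_real:
  fixes g :: "real \<Rightarrow> real" and \<psi> :: "real \<Rightarrow> real"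
  assumes g: "g absolutely_integrable_on {a..b}" and c: "continuous_on {a..b} \<psi>"
  shows "(\<lambda>y. \<psi> y * g y) absolutely_integrable_on {a..b}"
proof (rule absolutely_integrable_bounded_measurable_product_real[OF _ _ _ g])
  show "\<psi> \<in> borel_measurable (lebesgue_on {a..b})"
    by (rule continuous_imp_measurable_on_sets_lebesgue[OF c]) simp
  show "{a..b} \<in> sets lebesgue" by simp
  show "bounded (\<psi> ` {a..b})"
    by (rule compact_imp_bounded, rule compact_continuous_image[OF c]) simp
qed

lemma periodic_reflect_integral:
  fixes h :: "real \<Rightarrow> 'a::banach"
  assumes L: "L > 0" and per: "periodic L h" and int: "h integrable_on {-L..L}"
  shows "((\<lambda>y. h (x - y)) has_integral integral {-L..L} h) {-L..L}"
proof -
  define I where "I = integral {-L..L} h"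
  have "(h has_integral I) {(x-L)..(x-L)+2*L}"
    using periodic_shift_integral[OF L per int, of "x-L"] unfolding I_def by simp
  moreover have "(x-L)+2*L = x+L" by simp
  ultimately have "(h has_integral I) {x-L..x+L}" by metis
  then have "((\<lambda>u. h (-u)) has_integral I) {-(x+L)..-(x-L)}"
    using has_integral_reflect_real[of h I "x-L" "x+L"] by blast
  moreover have "-(x+L) = -L-x" "-(x-L) = L-x" by simp_all
  ultimately have "((\<lambda>u. h (-u)) has_integral I) {-L-x..L-x}" by metis
  then have "(((\<lambda>u. h (-u)) \<circ> (+) (-x)) has_integral I) {-L..L}"
    using has_integral_shift_Icc_real[of "\<lambda>u. h (-u)" "-x" I "-L" L] by (simp add: add.commute)
  then show ?thesis unfolding I_def by (simp add: o_def)
qed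

lemma odd_integral_zero:
  fixes f :: "real \<Rightarrow> real"
  assumes odd: "\<And>s. f (-s) = - f s" and int: "f integrable_on {-L..L}"
  shows "integral {-L..L} f = 0"
proof -
  have "(f has_integral integral {-L..L} f) {-L..L}" using int by (simp add: integrable_integral)
  then have "((\<lambda>s. f (-s)) has_integral integral {-L..L} f) {-L..L}"
    using has_integral_reflect_real[where f=f and a="-L" and b=L] by simp
  then have "((\<lambda>s. - f s) has_integral integral {-L..L} f) {-L..L}" using odd by simp
  then have "(f has_integral - integral {-L..L} f) {-L..L}"
    using has_integral_neg_iff by fastforce
  then have "integral {-L..L} f = - integral {-L..L} f" by (rule integral_unique)
  then show ?thesis by simp
qed

lemma ek_cis: "ek L k s = cis (real_of_int k * pi * s / L)"
  unfolding ek_def wk_def cis_conv_exp by (simp add: scaleR_conv_of_real algebra_simps)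

lemma G_facts:
  assumes "H0 L G"
  shows "\<And>x. G x \<ge> 0" "periodic L G" "G integrable_on {-L..L}" "\<And>x. G (-x) = G x"
    "integral {-L..L} G / (2*L) = 1"
  using assms unfolding H0_def periodic_def by auto

lemma G_absint: assumes "H0 L G" shows "G absolutely_integrable_on {-L..L}"
  by (rule nonnegative_absolutely_integrable_1) (use G_facts[OF assms] in auto)

lemma conv_integrable:
  assumes L: "L > 0" and H0: "H0 L G" and c: "continuous_on {-L..L} \<psi>"
  shows "(\<lambda>y. complex_of_real (G (x - y)) * \<psi> y) integrable_on {-L..L}"
  using absint_mult_cont[OF G_shift_absint[OF L H0] c] by (rule set_lebesgue_integral_eq_integral(1))


lemma ek_add_arg: "ek L k (a + b) = ek L k a * ek L k b"
  unfolding ek_def by (simp add: scaleR_add_left exp_add)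

lemma ek_neg_arg: "ek L (-k) s = ek L k (-s)"
  unfolding ek_def wk_def by (simp add: scaleR_conv_of_real)

lemma cos_int_nat: "cos (real_of_int j * pi * s / L) = cos (real (nat \<bar>j\<bar>) * pi * s / L)"
proof (cases "j \<ge> 0")
  case True then show ?thesis by simp
next
  case False
  then have "real (nat \<bar>j\<bar>) = - real_of_int j" by simp
  then have "real (nat \<bar>j\<bar>) * pi * s / L = - (real_of_int j * pi * s / L)" by simp
  then show ?thesis by (metis cos_minus)
qed

lemma Cn_integral:
  assumes L: "L > 0" and H0: "H0 L G"
  shows "integral {-L..L} (\<lambda>s. complex_of_real (G s) * ek L (-j) s) = complex_of_real (2*L * Cn L G (nat \<bar>j\<bar>))"
proof -
  define k where "k s = complex_of_real (G s) * ek L (-j) s" for s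
  have kint: "k integrable_on {-L..L}"
    unfolding k_def using absint_mult_cont[OF G_absint[OF H0] ek_cont]
    by (rule set_lebesgue_integral_eq_integral(1))
  have Rek: "Re (k s) = cos (real (nat \<bar>j\<bar>) * pi * s / L) * G s" for s
    unfolding k_def ek_cis using cos_int_nat[of j s L] by simp
  have Imk: "Im (k s) = - (sin (real_of_int j * pi * s / L) * G s)" for s
    unfolding k_def ek_cis by simp
  have "Re (integral {-L..L} k) = integral {-L..L} (Re \<circ> k)"
    using integral_linear[OF kint bounded_linear_Re] by simp
  also have "\<dots> = integral {-L..L} (\<lambda>s. cos (real (nat \<bar>j\<bar>) * pi * s / L) * G s)"
    by (simp add: o_def Rek)
  also have "\<dots> = 2*L * Cn L G (nat \<bar>j\<bar>)" unfolding Cn_def using L by simp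
  finally have re: "Re (integral {-L..L} k) = 2*L * Cn L G (nat \<bar>j\<bar>)" .
  have imint: "(Im \<circ> k) integrable_on {-L..L}" by (rule integrable_linear[OF kint bounded_linear_Im])
  have "Im (integral {-L..L} k) = integral {-L..L} (Im \<circ> k)"
    using integral_linear[OF kint bounded_linear_Im] by simp
  also have "\<dots> = 0"
  proof (rule odd_integral_zero[OF _ imint])
    fix s
    show "(Im \<circ> k) (- s) = - (Im \<circ> k) s"
      using G_facts(4)[OF H0, of s] by (simp add: Imk)
  qed
  finally have im: "Im (integral {-L..L} k) = 0" .
  show ?thesis unfolding k_def[symmetric] by (rule complex_eqI) (simp_all add: re im)
qed

lemma conv_ek:
  assumes L: "L > 0" and H0: "H0 L G"
  shows "conv L G (ek L j) x = complex_of_real (Cn L G (nat \<bar>j\<bar>)) * ek L j x"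
proof -
  define k where "k s = complex_of_real (G s) * ek L (-j) s" for s
  have kint: "k integrable_on {-L..L}"
    unfolding k_def using absint_mult_cont[OF G_absint[OF H0] ek_cont]
    by (rule set_lebesgue_integral_eq_integral(1))
  have kper: "periodic L k"
    unfolding periodic_def k_def using G_facts(2)[OF H0] ek_periodic[of L] L
    unfolding periodic_def by simp
  have pt: "complex_of_real (G (x - y)) * ek L j y = ek L j x * k (x - y)" for y
  proof -
    have "ek L j y = ek L j x * ek L j (y - x)" using ek_add_arg[of L j x "y - x"] by simp
    moreover have "ek L (-j) (x - y) = ek L j (y - x)" using ek_neg_arg[of L j "x - y"] by simp
    ultimately show ?thesis unfolding k_def by simp
  qed
  have "conv L G (ek L j) x = integral {-L..L} (\<lambda>y. ek L j x * k (x - y)) / complex_of_real (2*L)"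
    unfolding conv_def pt ..
  also have "\<dots> = ek L j x * integral {-L..L} k / complex_of_real (2*L)"
    using integral_unique[OF periodic_reflect_integral[OF L kper kint, of x]] by simp
  also have "\<dots> = complex_of_real (Cn L G (nat \<bar>j\<bar>)) * ek L j x"
    using Cn_integral[OF L H0, of j] L unfolding k_def[symmetric] by (simp add: field_simps)
  finally show ?thesis .
qed


definition FC :: "real \<Rightarrow> (real \<Rightarrow> complex) \<Rightarrow> int \<Rightarrow> complex" where
  "FC L h k = integral {-L..L} (\<lambda>x. h x * ek L (-k) x)"

lemma wk_nz: "L > 0 \<Longrightarrow> m \<noteq> 0 \<Longrightarrow> wk L m \<noteq> 0"
  unfolding wk_def by simp

lemma ek_integral:
  assumes L: "L > 0"
  shows "(ek L m has_integral (if m = 0 then complex_of_real (2*L) else 0)) {-L..L}"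
proof (cases "m = 0")
  case True
  have e: "ek L m = (\<lambda>x. 1)" using True by (simp add: fun_eq_iff)
  show ?thesis using L has_integral_const_real[of "1::complex" "-L" L] True unfolding e
    by (simp add: scaleR_conv_of_real)
next
  case False
  have d: "((\<lambda>x. ek L m x / wk L m) has_vector_derivative ek L m x) (at x within {-L..L})" for x
    using ek_deriv[of L m x "{-L..L}"] wk_nz[OF L False]
    by (auto intro!: derivative_eq_intros simp: field_simps)
  have "(ek L m has_integral (ek L m L / wk L m - ek L m (-L) / wk L m)) {-L..L}"
    by (rule fundamental_theorem_of_calculus) (use L d in auto)
  moreover have "ek L m L = ek L m (-L)" using ek_periodic[of L m "-L"] L by simp
  ultimately show ?thesis using False by simp
qed

lemma FC_ek:
  assumes L: "L > 0"
  shows "FC L (ek L j) k = (if j = k then complex_of_real (2*L) else 0)"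
proof -
  have "FC L (ek L j) k = integral {-L..L} (ek L (j - k))"
    unfolding FC_def by (simp add: ek_mult)
  then show ?thesis using integral_unique[OF ek_integral[OF L, of "j-k"]] by simp
qed

lemma periodic_deriv:
  assumes L: "L > 0" and per: "periodic L h" and d: "\<And>x. (h has_vector_derivative h1 x) (at x)"
  shows "periodic L h1"
  unfolding periodic_def
proof
  fix x
  have "((\<lambda>x. x + 2*L) has_vector_derivative 1) (at x)"
    by (auto intro!: derivative_eq_intros)
  from vector_diff_chain_at[OF this d]
  have "((h \<circ> (\<lambda>x. x + 2*L)) has_vector_derivative h1 (x + 2*L)) (at x)" by simp
  moreover have "h \<circ> (\<lambda>x. x + 2*L) = h" using per unfolding periodic_def by auto
  ultimately have "(h has_vector_derivative h1 (x + 2*L)) (at x)" by simp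
  then show "h1 (x + 2*L) = h1 x" using d[of x] by (rule vector_derivative_unique_at)
qed

lemma FC_deriv:
  assumes L: "L > 0" and per: "periodic L h" and d: "\<And>x. (h has_vector_derivative h1 x) (at x)"
  shows "FC L h1 k = wk L k * FC L h k"
proof -
  define e where "e = ek L (-k)"
  have cont: "continuous_on UNIV h"
    by (rule continuous_on_vector_derivative) (use d has_vector_derivative_at_within in blast)
  have d2: "((\<lambda>x. h x * e x) has_vector_derivative (h1 x * e x + h x * (wk L (-k) * e x))) (at x within {-L..L})" for x
    using has_vector_derivative_mult[OF has_vector_derivative_at_within[OF d[of x]] ek_deriv[of L "-k" x "{-L..L}"]]
    unfolding e_def by (simp add: algebra_simps)
  have "((\<lambda>x. h1 x * e x + h x * (wk L (-k) * e x)) has_integral (h L * e L - h (-L) * e (-L))) {-L..L}"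
    by (rule fundamental_theorem_of_calculus) (use L d2 in auto)
  moreover have "h L * e L - h (-L) * e (-L) = 0"
    using per ek_periodic[of L "-k" "-L"] L unfolding periodic_def e_def
    by (metis add.commute add_diff_cancel_left' diff_add_cancel minus_add_cancel mult_2 right_minus_eq)
  ultimately have I1: "((\<lambda>x. h1 x * e x + h x * (wk L (-k) * e x)) has_integral 0) {-L..L}" by simp
  have he: "(\<lambda>x. h x * e x) integrable_on {-L..L}"
    unfolding e_def by (rule integrable_continuous_real) (intro continuous_intros continuous_on_subset[OF cont]; simp)
  then have I2: "((\<lambda>x. h x * (wk L (-k) * e x)) has_integral wk L (-k) * FC L h k) {-L..L}"
    unfolding FC_def e_def using has_integral_mult_right[OF integrable_integral[OF he], of "wk L (-k)"]
    by (simp add: algebra_simps e_def)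
  have "((\<lambda>x. h1 x * e x) has_integral (0 - wk L (-k) * FC L h k)) {-L..L}"
    using has_integral_diff[OF I1 I2] by simp
  then have "FC L h1 k = - wk L (-k) * FC L h k"
    unfolding FC_def e_def by (simp add: integral_unique)
  then show ?thesis unfolding wk_def by simp
qed


inductive_set TP :: "real \<Rightarrow> (real \<Rightarrow> complex) set" for L where
  TP0: "(\<lambda>x. 0) \<in> TP L"
| TPs: "p \<in> TP L \<Longrightarrow> (\<lambda>x. p x + c * ek L k x) \<in> TP L"

lemma TP_ek: "(\<lambda>x. c * ek L k x) \<in> TP L"
  using TPs[OF TP0[of L], where c=c and k=k] by simp

lemma TP_add: assumes P: "p \<in> TP L" and Q: "q \<in> TP L" shows "(\<lambda>x. p x + q x) \<in> TP L"
  using Q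
proof (induction q rule: TP.induct)
  case TP0 then show ?case using P by simp
next
  case (TPs q c k)
  have "(\<lambda>x. (p x + q x) + c * ek L k x) \<in> TP L" using TPs by (intro TP.TPs) simp
  then show ?case by (simp add: add.assoc)
qed

lemma TP_scale: "p \<in> TP L \<Longrightarrow> (\<lambda>x. a * p x) \<in> TP L"
proof (induction p rule: TP.induct)
  case TP0 then show ?case by (simp add: TP.TP0)
next
  case (TPs q c k)
  have "(\<lambda>x. a * q x + (a * c) * ek L k x) \<in> TP L" using TPs by (intro TP.TPs)
  then show ?case by (simp add: algebra_simps)
qed

lemma TP_mult_ek: "p \<in> TP L \<Longrightarrow> (\<lambda>x. p x * ek L k x) \<in> TP L"
proof (induction p rule: TP.induct)
  case TP0 then show ?case by (simp add: TP.TP0)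
next
  case (TPs q c j)
  have "(\<lambda>x. q x * ek L k x + c * ek L (j + k) x) \<in> TP L" using TPs by (intro TP.TPs)
  then show ?case by (simp add: algebra_simps ek_mult[symmetric])
qed

lemma TP_mult: assumes P: "p \<in> TP L" and Q: "q \<in> TP L" shows "(\<lambda>x. p x * q x) \<in> TP L"
  using Q
proof (induction q rule: TP.induct)
  case TP0 then show ?case by (simp add: TP.TP0)
next
  case (TPs q c k)
  have "(\<lambda>x. p x * q x + c * (p x * ek L k x)) \<in> TP L"
    using TPs TP_scale[OF TP_mult_ek[OF P]] by (intro TP_add) auto
  then show ?case by (simp add: algebra_simps)
qed

lemma TP_cont: "p \<in> TP L \<Longrightarrow> continuous_on S p"
  by (induction p rule: TP.induct) (auto intro!: continuous_intros)

lemma FC_add: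
  assumes "continuous_on {-L..L} p" "continuous_on {-L..L} q"
  shows "FC L (\<lambda>x. p x + q x) k = FC L p k + FC L q k"
proof -
  have "(\<lambda>x. p x * ek L (-k) x) integrable_on {-L..L}" "(\<lambda>x. q x * ek L (-k) x) integrable_on {-L..L}"
    using assms by (auto intro!: integrable_continuous_real continuous_intros)
  then show ?thesis unfolding FC_def by (simp add: distrib_right integral_add)
qed

lemma FC_diff:
  assumes "continuous_on {-L..L} p" "continuous_on {-L..L} q"
  shows "FC L (\<lambda>x. p x - q x) k = FC L p k - FC L q k"
proof -
  have "(\<lambda>x. p x * ek L (-k) x) integrable_on {-L..L}" "(\<lambda>x. q x * ek L (-k) x) integrable_on {-L..L}"
    using assms by (auto intro!: integrable_continuous_real continuous_intros)
  then show ?thesis unfolding FC_def by (simp add: left_diff_distrib integral_diff)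
qed

lemma FC_scale: "FC L (\<lambda>x. a * p x) k = a * FC L p k"
  unfolding FC_def by (simp add: mult.assoc)

lemma conv_add:
  assumes L: "L > 0" and H0: "H0 L G" and "continuous_on {-L..L} p" "continuous_on {-L..L} q"
  shows "conv L G (\<lambda>x. p x + q x) x = conv L G p x + conv L G q x"
  using conv_integrable[OF L H0 assms(3), of x] conv_integrable[OF L H0 assms(4), of x]
  unfolding conv_def by (simp add: distrib_left integral_add add_divide_distrib)

lemma conv_diff:
  assumes L: "L > 0" and H0: "H0 L G" and "continuous_on {-L..L} p" "continuous_on {-L..L} q"
  shows "conv L G (\<lambda>x. p x - q x) x = conv L G p x - conv L G q x"
  using conv_integrable[OF L H0 assms(3), of x] conv_integrable[OF L H0 assms(4), of x]
  unfolding conv_def by (simp add: right_diff_distrib integral_diff diff_divide_distrib)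

lemma conv_scale: "conv L G (\<lambda>x. a * p x) x = a * conv L G p x"
  unfolding conv_def by (simp add: algebra_simps)

lemma TP_conv:
  assumes L: "L > 0" and H0: "H0 L G"
  shows "p \<in> TP L \<Longrightarrow> \<exists>q \<in> TP L. (\<forall>x. conv L G p x = q x) \<and>
            (\<forall>k. FC L q k = complex_of_real (Cn L G (nat \<bar>k\<bar>)) * FC L p k)"
proof (induction p rule: TP.induct)
  case TP0
  show ?case by (rule bexI[of _ "\<lambda>x. 0"]) (auto simp: conv_def FC_def TP.TP0)
next
  case (TPs p c j)
  then obtain q where q: "q \<in> TP L" "\<forall>x. conv L G p x = q x"
     "\<forall>k. FC L q k = complex_of_real (Cn L G (nat \<bar>k\<bar>)) * FC L p k" by blast
  define q' where "q' = (\<lambda>x. q x + (c * complex_of_real (Cn L G (nat \<bar>j\<bar>))) * ek L j x)"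
  have "q' \<in> TP L" unfolding q'_def by (rule TP.TPs[OF q(1)])
  moreover have "conv L G (\<lambda>x. p x + c * ek L j x) x = q' x" for x
  proof -
    have "conv L G (\<lambda>x. p x + c * ek L j x) x = conv L G p x + conv L G (\<lambda>x. c * ek L j x) x"
      by (rule conv_add[OF L H0]) (auto intro!: continuous_intros TP_cont[OF TPs(1)])
    also have "\<dots> = q' x" unfolding conv_scale conv_ek[OF L H0] q'_def using q(2) by simp
    finally show ?thesis .
  qed
  moreover have "FC L q' k = complex_of_real (Cn L G (nat \<bar>k\<bar>)) * FC L (\<lambda>x. p x + c * ek L j x) k" for k
  proof -
    have "FC L q' k = FC L q k + (c * complex_of_real (Cn L G (nat \<bar>j\<bar>))) * FC L (ek L j) k"
      unfolding q'_def by (subst FC_add) (auto intro!: continuous_intros TP_cont[OF q(1)] simp: FC_scale)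
    moreover have "FC L (\<lambda>x. p x + c * ek L j x) k = FC L p k + c * FC L (ek L j) k"
      by (subst FC_add) (auto intro!: continuous_intros TP_cont[OF TPs(1)] simp: FC_scale)
    ultimately show ?thesis using q(3) by (simp add: FC_ek[OF L] algebra_simps)
  qed
  ultimately show ?case by blast
qed


lemma TP_const: "(\<lambda>x. c) \<in> TP L"
  using TP_ek[of c L 0] by simp

lemma TP_Re_Im:
  assumes L: "L > 0"
  shows "(\<lambda>x. complex_of_real (Re (ek L 1 x))) \<in> TP L" "(\<lambda>x. complex_of_real (Im (ek L 1 x))) \<in> TP L"
proof -
  have r: "complex_of_real (Re z) = (1/2) * z + (1/2) * cnj z" for z
    by (simp add: complex_eq_iff)
  have i: "complex_of_real (Im z) = (-\<i>/2) * z + (\<i>/2) * cnj z" for z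
    by (simp add: complex_eq_iff)
  have e: "cnj (ek L 1 x) = ek L (-1) x" for x using ek_neg[of L 1 x] by simp
  show "(\<lambda>x. complex_of_real (Re (ek L 1 x))) \<in> TP L"
    unfolding r e by (intro TP_add TP_ek)
  show "(\<lambda>x. complex_of_real (Im (ek L 1 x))) \<in> TP L"
    unfolding i e by (intro TP_add TP_ek)
qed

lemma rpf_TP:
  assumes L: "L > 0"
  shows "real_polynomial_function r \<Longrightarrow> (\<lambda>x. complex_of_real (r (ek L 1 x))) \<in> TP L"
proof (induction r rule: real_polynomial_function.induct)
  case (linear f)
  interpret f: bounded_linear f by fact
  have fz: "f z = Re z * f 1 + Im z * f \<i>" for z
  proof -
    have e: "Re z *\<^sub>R 1 + Im z *\<^sub>R \<i> = z" by (simp add: complex_eq_iff)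
    have "f z = f (Re z *\<^sub>R 1 + Im z *\<^sub>R \<i>)" by (simp only: e)
    also have "\<dots> = f (Re z *\<^sub>R 1) + f (Im z *\<^sub>R \<i>)" by (rule f.add)
    also have "\<dots> = Re z * f 1 + Im z * f \<i>"
      by (simp add: f.scaleR)
    finally show ?thesis .
  qed
  have "(\<lambda>x. complex_of_real (f (ek L 1 x))) =
     (\<lambda>x. complex_of_real (f 1) * complex_of_real (Re (ek L 1 x)) + complex_of_real (f \<i>) * complex_of_real (Im (ek L 1 x)))"
  proof (rule ext)
    fix x
    show "complex_of_real (f (ek L 1 x)) = complex_of_real (f 1) * complex_of_real (Re (ek L 1 x)) + complex_of_real (f \<i>) * complex_of_real (Im (ek L 1 x))"
      unfolding fz[of "ek L 1 x"] by (simp add: algebra_simps)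
  qed
  then show ?case using TP_Re_Im[OF L] by (simp add: TP_add TP_scale)
next
  case (const c)
  then show ?case using TP_const by simp
next
  case (add f g)
  then show ?case using TP_add by fastforce
next
  case (mult f g)
  then show ?case using TP_mult by fastforce
qed

lemma pf_TP:
  assumes L: "L > 0" and g: "polynomial_function (g :: complex \<Rightarrow> complex)"
  shows "(\<lambda>x. g (ek L 1 x)) \<in> TP L"
proof -
  have h: "real_polynomial_function (\<lambda>z. inner (g z) b)" if "b \<in> Basis" for b
    using g that polynomial_function_iff_Basis_inner by blast
  have "real_polynomial_function (\<lambda>z. inner (g z) 1)" by (rule h) (simp add: Basis_complex_def)
  moreover have "real_polynomial_function (\<lambda>z. inner (g z) \<i>)" by (rule h) (simp add: Basis_complex_def)
  ultimately
  have r1: "real_polynomial_function (\<lambda>z. Re (g z))" and r2: "real_polynomial_function (\<lambda>z. Im (g z))"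
    by (simp_all add: inner_complex_def)
  have ge: "complex_of_real (Re (g z)) + \<i> * complex_of_real (Im (g z)) = g z" for z
    by (simp add: complex_eq_iff)
  have "(\<lambda>x. g (ek L 1 x)) = (\<lambda>x. complex_of_real (Re (g (ek L 1 x))) + \<i> * complex_of_real (Im (g (ek L 1 x))))"
    by (simp only: ge)
  then show ?thesis using rpf_TP[OF L r1] rpf_TP[OF L r2] by (simp add: TP_add TP_scale)
qed

lemma Arg_ek1:
  assumes L: "L > 0" and x: "x \<in> {-L<..L}"
  shows "Arg (ek L 1 x) = pi * x / L"
proof (rule Arg_unique[of 1])
  show "complex_of_real 1 * exp (\<i> * complex_of_real (pi * x / L)) = ek L 1 x"
    unfolding ek_def wk_def by (simp add: scaleR_conv_of_real algebra_simps)
  have "-L < x" "x \<le> L" using x by auto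
  then have "pi * (-L) < pi * x" "pi * x \<le> pi * L"
    using mult_strict_left_mono[of "-L" x pi] mult_left_mono[of x L pi] pi_gt_zero by auto
  then show "- pi < pi * x / L" "pi * x / L \<le> pi" using L by (simp_all add: field_simps)
qed simp

lemma approx_TP:
  assumes L: "L > 0" and c: "continuous_on UNIV \<psi>" and per: "periodic L \<psi>" and e: "e > 0"
  shows "\<exists>p \<in> TP L. \<forall>x \<in> {-L..L}. norm (\<psi> x - p x) < e"
proof -
  define S where "S = {-L..L}"
  define T where "T = sphere (0::complex) 1"
  define q where "q = ek L 1"
  define \<Psi> where "\<Psi> z = \<psi> (L * Arg z / pi)" for z
  have qS: "q ` S = T"
  proof
    show "q ` S \<subseteq> T" unfolding T_def q_def by auto
    show "T \<subseteq> q ` S"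
    proof
      fix z assume "z \<in> T"
      then have nz: "norm z = 1" unfolding T_def by simp
      define x where "x = L * Arg z / pi"
      have "-pi < Arg z" "Arg z \<le> pi" by (rule mpi_less_Arg, rule Arg_le_pi)
      then have "L * (-pi) < L * Arg z" "L * Arg z \<le> L * pi"
        using L mult_strict_left_mono[of "-pi" "Arg z" L] mult_left_mono[of "Arg z" pi L] by auto
      then have "x \<in> S" unfolding x_def S_def using L by (auto simp: field_simps)
      moreover have "q x = z"
        using nz complex_norm_eq_1_exp_eq[of z] L unfolding q_def ek_def wk_def x_def
        by (simp add: scaleR_conv_of_real algebra_simps)
      ultimately show "z \<in> q ` S" by blast
    qed
  qed
  have \<Psi>q: "\<Psi> (q x) = \<psi> x" if "x \<in> S" for x
  proof (cases "x = -L")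
    case True
    have "q x = q L" unfolding q_def using ek_periodic[of L 1 "-L"] L True by simp
    moreover have "\<Psi> (q L) = \<psi> L" unfolding \<Psi>_def q_def using Arg_ek1[OF L, of L] L by simp
    moreover have "\<psi> L = \<psi> (-L)" using per unfolding periodic_def by (metis add.commute add_minus_cancel mult_2)
    ultimately show ?thesis using True by simp
  next
    case False
    then have "x \<in> {-L<..L}" using that unfolding S_def by auto
    then show ?thesis unfolding \<Psi>_def q_def using Arg_ek1[OF L] L by simp
  qed
  have cq: "continuous_on S q" unfolding q_def by (rule ek_cont)
  have cS: "compact S" unfolding S_def by simp
  have cont: "continuous_on T \<Psi>"
  proof -
    have "openin (top_of_set T) (T \<inter> \<Psi> -` U)" if U: "open U" for U
    proof -
      have eq: "S \<inter> q -` (T \<inter> \<Psi> -` U) = S \<inter> \<psi> -` U"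
      proof (intro set_eqI iffI)
        fix x assume "x \<in> S \<inter> q -` (T \<inter> \<Psi> -` U)"
        then show "x \<in> S \<inter> \<psi> -` U" using \<Psi>q[of x] by simp
      next
        fix x assume x: "x \<in> S \<inter> \<psi> -` U"
        then have "q x \<in> T" using qS by blast
        then show "x \<in> S \<inter> q -` (T \<inter> \<Psi> -` U)" using \<Psi>q[of x] x by simp
      qed
      have "openin (top_of_set S) (S \<inter> \<psi> -` U)"
        by (rule continuous_openin_preimage_gen[OF continuous_on_subset[OF c] U]) simp
      then show ?thesis
        using Abstract_Topology_2.continuous_imp_quotient_map[OF cq qS cS, of "T \<inter> \<Psi> -` U"] eq by auto
    qed
    then show ?thesis
      using continuous_on_open_gen[of \<Psi> T UNIV] by auto
  qed
  obtain g where g: "polynomial_function g" "\<forall>z \<in> T. norm (\<Psi> z - g z) < e"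
    using Stone_Weierstrass_polynomial_function[OF _ cont e] unfolding T_def by auto
  have "(\<lambda>x. g (q x)) \<in> TP L" unfolding q_def by (rule pf_TP[OF L g(1)])
  moreover have "\<forall>x \<in> {-L..L}. norm (\<psi> x - g (q x)) < e"
  proof
    fix x assume x: "x \<in> {-L..L}"
    then have "q x \<in> T" using qS unfolding S_def by blast
    then have "norm (\<Psi> (q x) - g (q x)) < e" using g(2) by blast
    then show "norm (\<psi> x - g (q x)) < e" using \<Psi>q[of x] x unfolding S_def by simp
  qed
  ultimately show ?thesis by (intro bexI[of _ "\<lambda>x. g (q x)"])
qed


lemma FC_bound:
  assumes L: "L > 0" and c: "continuous_on {-L..L} h" and B: "\<And>x. x \<in> {-L..L} \<Longrightarrow> norm (h x) \<le> B"
  shows "norm (FC L h k) \<le> B * (2*L)"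
proof -
  have "norm (FC L h k) \<le> B * (L - (-L))"
    unfolding FC_def
    by (rule integral_bound) (use L c B in \<open>auto intro!: continuous_intros simp: norm_mult\<close>)
  then show ?thesis by simp
qed

lemma conv_bound:
  assumes L: "L > 0" and H0: "H0 L G" and c: "continuous_on {-L..L} h"
    and B: "\<And>x. x \<in> {-L..L} \<Longrightarrow> norm (h x) \<le> B"
  shows "norm (conv L G h x) \<le> B"
proof -
  have gi: "((\<lambda>y. G (x - y) * B) has_integral (2*L) * B) {-L..L}"
    using has_integral_mult_left[OF G_shift_integral[OF L H0, of x]] by simp
  have "norm (integral {-L..L} (\<lambda>y. complex_of_real (G (x - y)) * h y)) \<le> integral {-L..L} (\<lambda>y. G (x - y) * B)"
  proof (rule integral_norm_bound_integral[OF conv_integrable[OF L H0 c]])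
    show "(\<lambda>y. G (x - y) * B) integrable_on {-L..L}" using gi by blast
    fix y assume "y \<in> {-L..L}"
    then show "norm (complex_of_real (G (x - y)) * h y) \<le> G (x - y) * B"
      using B G_facts(1)[OF H0, of "x-y"] by (simp add: norm_mult mult_left_mono)
  qed
  also have "\<dots> = 2*L*B" using integral_unique[OF gi] by simp
  finally have "norm (integral {-L..L} (\<lambda>y. complex_of_real (G (x - y)) * h y)) \<le> 2*L*B" .
  then show ?thesis unfolding conv_def using L by (simp add: norm_divide field_simps)
qed

lemma small_zero:
  fixes D :: complex and K :: real
  assumes "\<And>e. e > 0 \<Longrightarrow> norm D \<le> K * e"
  shows "D = 0"
proof (rule ccontr)
  assume "D \<noteq> 0"
  then have n: "norm D > 0" by simp
  have "norm D \<le> K" using assms[of 1] by simp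
  then have K: "K > 0" using n by linarith
  have "norm D \<le> K * (norm D / (2*K))" using assms[of "norm D / (2*K)"] n K by simp
  then show False using n K by (simp add: field_simps)
qed

lemma FC_conv:
  assumes L: "L > 0" and H0: "H0 L G" and c: "continuous_on UNIV \<psi>" and per: "periodic L \<psi>"
    and cc: "continuous_on {-L..L} (conv L G \<psi>)"
  shows "FC L (conv L G \<psi>) k = complex_of_real (Cn L G (nat \<bar>k\<bar>)) * FC L \<psi> k"
proof -
  define C where "C = complex_of_real (Cn L G (nat \<bar>k\<bar>))"
  have cL: "continuous_on {-L..L} \<psi>" using c by (rule continuous_on_subset) simp
  have "norm (FC L (conv L G \<psi>) k - C * FC L \<psi> k) \<le> (2*L*(1 + norm C)) * e" if e: "e > 0" for e
  proof -
    obtain p where p: "p \<in> TP L" "\<forall>x\<in>{-L..L}. norm (\<psi> x - p x) < e"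
      using approx_TP[OF L c per e] by blast
    obtain q where q: "q \<in> TP L" "\<forall>x. conv L G p x = q x"
        "\<forall>j. FC L q j = complex_of_real (Cn L G (nat \<bar>j\<bar>)) * FC L p j"
      using TP_conv[OF L H0 p(1)] by blast
    have q3: "FC L q k = C * FC L p k" using q(3) unfolding C_def by blast
    have cp: "continuous_on {-L..L} p" "continuous_on {-L..L} q" using p(1) q(1) by (auto intro: TP_cont)
    have "norm (conv L G \<psi> x - q x) \<le> e" if "x \<in> {-L..L}" for x
    proof -
      have "conv L G \<psi> x - q x = conv L G (\<lambda>y. \<psi> y - p y) x"
        using conv_diff[OF L H0 cL cp(1)] q(2) by simp
      also have "norm \<dots> \<le> e"
        by (rule conv_bound[OF L H0]) (use cL cp p(2) in \<open>auto intro!: continuous_intros less_imp_le\<close>)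
      finally show ?thesis .
    qed
    then have n1: "norm (FC L (\<lambda>x. conv L G \<psi> x - q x) k) \<le> e * (2*L)"
      by (intro FC_bound[OF L]) (auto intro!: continuous_intros cc cp)
    have n2: "norm (FC L (\<lambda>x. \<psi> x - p x) k) \<le> e * (2*L)"
      by (intro FC_bound[OF L]) (use p(2) in \<open>auto intro!: continuous_intros cL cp less_imp_le\<close>)
    have "FC L (conv L G \<psi>) k - C * FC L \<psi> k =
          FC L (\<lambda>x. conv L G \<psi> x - q x) k - C * FC L (\<lambda>x. \<psi> x - p x) k"
      unfolding FC_diff[OF cc cp(2), of k] FC_diff[OF cL cp(1), of k] q3
      by (simp add: algebra_simps)
    also have "norm \<dots> \<le> e * (2*L) + norm C * (e * (2*L))"
      using n1 n2 norm_triangle_ineq4[of "FC L (\<lambda>x. conv L G \<psi> x - q x) k" "C * FC L (\<lambda>x. \<psi> x - p x) k"]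
      by (smt (verit) mult_left_mono norm_ge_zero norm_mult)
    also have "\<dots> = (2*L*(1 + norm C)) * e" by (simp add: algebra_simps)
    finally show ?thesis .
  qed
  then have "FC L (conv L G \<psi>) k - C * FC L \<psi> k = 0" by (rule small_zero)
  then show ?thesis unfolding C_def by simp
qed

lemma TP_orth:
  assumes L: "L > 0" and c: "continuous_on {-L..L} \<psi>" and z: "\<And>k. FC L \<psi> k = 0"
  shows "p \<in> TP L \<Longrightarrow> integral {-L..L} (\<lambda>x. \<psi> x * cnj (p x)) = 0"
proof (induction p rule: TP.induct)
  case TP0 then show ?case by simp
next
  case (TPs p c k)
  have cp: "continuous_on {-L..L} p" using TPs(1) by (rule TP_cont)
  have e: "\<psi> x * cnj (p x + c * ek L k x) = \<psi> x * cnj (p x) + cnj c * (\<psi> x * ek L (-k) x)" for x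
    by (simp add: ek_neg algebra_simps)
  have "integral {-L..L} (\<lambda>x. \<psi> x * cnj (p x + c * ek L k x)) =
        integral {-L..L} (\<lambda>x. \<psi> x * cnj (p x)) + integral {-L..L} (\<lambda>x. cnj c * (\<psi> x * ek L (-k) x))"
    unfolding e
    by (rule integral_add) (auto intro!: integrable_continuous_real continuous_intros c cp)
  also have "\<dots> = 0" using TPs(2) z[of k] unfolding FC_def by simp
  finally show ?case .
qed

lemma FC_unique:
  assumes L: "L > 0" and c: "continuous_on UNIV \<psi>" and per: "periodic L \<psi>" and z: "\<And>k. FC L \<psi> k = 0"
  shows "\<psi> x = 0"
proof -
  have cL: "continuous_on {-L..L} \<psi>" using c by (rule continuous_on_subset) simp
  obtain M where M0: "\<forall>x \<in> {-L..L}. norm (\<psi> x) \<le> M"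
    using compact_imp_bounded[OF compact_continuous_image[OF cL]] unfolding bounded_iff by auto
  have M: "norm (\<psi> x) \<le> M" if "x \<in> {-L..L}" for x using M0 that by blast
  define I where "I = integral {-L..L} (\<lambda>x. \<psi> x * cnj (\<psi> x))"
  have "norm I \<le> (M * (2*L)) * e" if e: "e > 0" for e
  proof -
    obtain p where p: "p \<in> TP L" "\<forall>x\<in>{-L..L}. norm (\<psi> x - p x) < e"
      using approx_TP[OF L c per e] by blast
    have cp: "continuous_on {-L..L} p" using p(1) by (rule TP_cont)
    have "I = integral {-L..L} (\<lambda>x. \<psi> x * cnj (\<psi> x - p x)) + integral {-L..L} (\<lambda>x. \<psi> x * cnj (p x))"
      unfolding I_def
      by (subst integral_add[symmetric]) (auto intro!: integrable_continuous_real continuous_intros cL cp simp: algebra_simps)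
    also have "\<dots> = integral {-L..L} (\<lambda>x. \<psi> x * cnj (\<psi> x - p x))"
      using TP_orth[OF L cL z p(1)] by simp
    also have "norm \<dots> \<le> (M * e) * (L - (-L))"
    proof (rule integral_bound)
      show "continuous_on {-L..L} (\<lambda>x. \<psi> x * cnj (\<psi> x - p x))" by (intro continuous_intros cL cp)
      fix t assume t: "t \<in> {-L..L}"
      have a: "norm (\<psi> t) \<le> M" using M[OF t] .
      have b: "norm (\<psi> t - p t) \<le> e" using p(2) t by (simp add: less_imp_le)
      have c: "0 \<le> M" using a norm_ge_zero[of "\<psi> t"] by linarith
      have "norm (\<psi> t) * norm (\<psi> t - p t) \<le> M * e"
        by (rule mult_mono[OF a b c norm_ge_zero])
      moreover have "norm (\<psi> t * cnj (\<psi> t - p t)) = norm (\<psi> t) * norm (\<psi> t - p t)"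
        by (simp only: norm_mult complex_mod_cnj)
      ultimately show "norm (\<psi> t * cnj (\<psi> t - p t)) \<le> M * e" by simp
    qed (use L in simp)
    finally show ?thesis by (simp add: algebra_simps)
  qed
  then have I0: "I = 0" by (rule small_zero)
  have "I = integral {-L..L} (\<lambda>x. complex_of_real ((norm (\<psi> x))^2))"
    unfolding I_def complex_norm_square ..
  also have "\<dots> = complex_of_real (integral {-L..L} (\<lambda>x. (norm (\<psi> x))^2))"
    using integral_linear[OF _ bounded_linear_of_real, of "\<lambda>x. (norm (\<psi> x))^2" "{-L..L}"]
    by (simp add: o_def integrable_continuous_real continuous_intros cL)
  finally have "integral {-L..L} (\<lambda>x. (norm (\<psi> x))^2) = 0" using I0 by simp
  then have hi: "((\<lambda>x. (norm (\<psi> x))^2) has_integral 0) (cbox (-L) L)"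
    using integrable_integral[OF integrable_continuous_real[of "-L" L "\<lambda>x. (norm (\<psi> x))^2"]]
    by (simp add: continuous_intros cL)
  have zL: "\<psi> t = 0" if t: "t \<in> {-L..L}" for t
  proof -
    have "(norm (\<psi> t))^2 = 0"
      by (rule has_integral_0_cbox_imp_0[OF _ _ hi]) (use L t in \<open>auto intro!: continuous_intros cL\<close>)
    then show ?thesis by simp
  qed
  obtain t where "t \<in> {-L..L}" "\<psi> x = \<psi> t" using periodic_reduce[OF L per] by blast
  then show ?thesis using zL by simp
qed


lemma FC_deriv_has:
  assumes L: "L > 0" and per: "periodic L h" and d: "\<And>x. (h has_vector_derivative h1 x) (at x)"
  shows "((\<lambda>x. h1 x * ek L (-k) x) has_integral (wk L k * FC L h k)) {-L..L}"
proof -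
  define e where "e = ek L (-k)"
  have cont: "continuous_on UNIV h"
    by (rule continuous_on_vector_derivative) (use d has_vector_derivative_at_within in blast)
  have d2: "((\<lambda>x. h x * e x) has_vector_derivative (h1 x * e x + h x * (wk L (-k) * e x))) (at x within {-L..L})" for x
    using has_vector_derivative_mult[OF has_vector_derivative_at_within[OF d[of x]] ek_deriv[of L "-k" x "{-L..L}"]]
    unfolding e_def by (simp add: algebra_simps)
  have "((\<lambda>x. h1 x * e x + h x * (wk L (-k) * e x)) has_integral (h L * e L - h (-L) * e (-L))) {-L..L}"
    by (rule fundamental_theorem_of_calculus) (use L d2 in auto)
  moreover have "h L * e L - h (-L) * e (-L) = 0"
    using per ek_periodic[of L "-k" "-L"] L unfolding periodic_def e_def
    by (metis add.commute add_diff_cancel_left' diff_add_cancel minus_add_cancel mult_2 right_minus_eq)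
  ultimately have I1: "((\<lambda>x. h1 x * e x + h x * (wk L (-k) * e x)) has_integral 0) {-L..L}" by simp
  have he: "(\<lambda>x. h x * e x) integrable_on {-L..L}"
    unfolding e_def by (rule integrable_continuous_real) (intro continuous_intros continuous_on_subset[OF cont]; simp)
  then have I2: "((\<lambda>x. h x * (wk L (-k) * e x)) has_integral wk L (-k) * FC L h k) {-L..L}"
    unfolding FC_def e_def using has_integral_mult_right[OF integrable_integral[OF he], of "wk L (-k)"]
    by (simp add: algebra_simps e_def)
  have "((\<lambda>x. h1 x * e x) has_integral (0 - wk L (-k) * FC L h k)) {-L..L}"
    using has_integral_diff[OF I1 I2] by simp
  moreover have "0 - wk L (-k) * FC L h k = wk L k * FC L h k" unfolding wk_def by simp
  ultimately show ?thesis unfolding e_def by simp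
qed

lemma conv_periodic:
  assumes H0: "H0 L G" shows "periodic L (conv L G \<psi>)"
  unfolding periodic_def conv_def
proof
  fix x
  have "G (x + 2*L - y) = G (x - y)" for y
    using G_facts(2)[OF H0] unfolding periodic_def by (metis add.commute add_diff_eq)
  then show "integral {-L..L} (\<lambda>y. complex_of_real (G (x + 2 * L - y)) * \<psi> y) / complex_of_real (2 * L) =
         integral {-L..L} (\<lambda>y. complex_of_real (G (x - y)) * \<psi> y) / complex_of_real (2 * L)" by simp
qed

lemma lam_wk: "wk L k * wk L k = - complex_of_real (lam L (nat \<bar>k\<bar>))"
proof -
  have "(real (nat \<bar>k\<bar>))^2 = (real_of_int k)^2" by simp
  then show ?thesis unfolding wk_sq lam_def by simp
qed

lemma eigen_disp:
  assumes L: "L > 0" and H0: "H0 L G"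
    and ev: "lin_eigenvalue L d \<alpha> \<mu> \<beta> \<kappa> G f g ev"
  defines "b \<equiv> g 1 + \<mu> + \<beta>"
    and "a \<equiv> deriv g 1 * (\<kappa> - kstar (g 1) \<kappa> \<mu> \<beta>) - \<beta> * kstar (g 1) \<kappa> \<mu> \<beta>"
  shows "ev = - complex_of_real b \<or> (\<exists>n. (ev + complex_of_real b) * (ev + complex_of_real (d * lam L n - deriv f 1))
            + complex_of_real (\<alpha> * a * Cn L G n * lam L n) = 0)"
proof -
  obtain \<phi> \<phi>1 \<phi>2 \<psi> Hc1 Hc2 where
    nz: "\<phi> \<noteq> (\<lambda>_. 0) \<or> \<psi> \<noteq> (\<lambda>_. 0)" and perp: "periodic L \<phi>" and perq: "periodic L \<psi>" and
    cq: "continuous_on UNIV \<psi>" and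
    d1: "\<And>x. (\<phi> has_vector_derivative \<phi>1 x) (at x)" and
    d2: "\<And>x. (\<phi>1 has_vector_derivative \<phi>2 x) (at x)" and
    h1: "\<And>x. (conv L G \<psi> has_vector_derivative Hc1 x) (at x)" and
    h2: "\<And>x. (Hc1 has_vector_derivative Hc2 x) (at x)" and
    e1: "\<And>x. of_real d * \<phi>2 x + of_real \<alpha> * Hc2 x + of_real (deriv f 1) * \<phi> x = ev * \<phi> x" and
    e2: "\<And>x. of_real a * \<phi> x - of_real b * \<psi> x = ev * \<psi> x"
    using ev unfolding lin_eigenvalue_def Let_def a_def b_def by blast
  show ?thesis
  proof (cases "\<forall>x. \<phi> x = 0")
    case True
    then obtain x where "\<psi> x \<noteq> 0" using nz by auto
    moreover have "- of_real b * \<psi> x = ev * \<psi> x" using e2[of x] True by simp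
    ultimately have "ev = - of_real b" by (metis mult_cancel_right)
    then show ?thesis by blast
  next
    case False
    have cp: "continuous_on UNIV \<phi>"
      by (rule continuous_on_vector_derivative) (use d1 has_vector_derivative_at_within in blast)
    obtain k where k: "FC L \<phi> k \<noteq> 0"
      using FC_unique[OF L cp perp] False by blast
    define n where "n = nat \<bar>k\<bar>"
    define l where "l = lam L n"
    define C where "C = complex_of_real (Cn L G n)"
    define \<Phi> where "\<Phi> = FC L \<phi> k"
    define \<Psi> where "\<Psi> = FC L \<psi> k"
    have wl: "wk L k * wk L k = - complex_of_real l" unfolding l_def n_def by (rule lam_wk)
    have perp1: "periodic L \<phi>1" by (rule periodic_deriv[OF L perp d1])
    have perH: "periodic L (conv L G \<psi>)" by (rule conv_periodic[OF H0])
    have perH1: "periodic L Hc1" by (rule periodic_deriv[OF L perH h1])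
    have cH: "continuous_on {-L..L} (conv L G \<psi>)"
      by (rule continuous_on_vector_derivative) (use h1 has_vector_derivative_at_within in blast)
    have FCH: "FC L (conv L G \<psi>) k = C * \<Psi>"
      unfolding C_def \<Psi>_def n_def by (rule FC_conv[OF L H0 cq perq cH])
    have i\<phi>2: "((\<lambda>x. \<phi>2 x * ek L (-k) x) has_integral (- complex_of_real l * \<Phi>)) {-L..L}"
      using FC_deriv_has[OF L perp1 d2, of k] FC_deriv[OF L perp d1, of k] wl
      unfolding \<Phi>_def by (simp add: mult.assoc[symmetric])
    have iH2: "((\<lambda>x. Hc2 x * ek L (-k) x) has_integral (- complex_of_real l * (C * \<Psi>))) {-L..L}"
      using FC_deriv_has[OF L perH1 h2, of k] FC_deriv[OF L perH h1, of k] wl FCH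
      by (simp add: mult.assoc[symmetric])
    have i\<phi>: "((\<lambda>x. \<phi> x * ek L (-k) x) has_integral \<Phi>) {-L..L}"
      unfolding \<Phi>_def FC_def
      by (rule integrable_integral, rule integrable_continuous_real)
         (intro continuous_intros continuous_on_subset[OF cp]; simp)
    have "((\<lambda>x. (of_real d * \<phi>2 x + of_real \<alpha> * Hc2 x + of_real (deriv f 1) * \<phi> x) * ek L (-k) x) has_integral
          (of_real d * (- complex_of_real l * \<Phi>) + of_real \<alpha> * (- complex_of_real l * (C * \<Psi>)) + of_real (deriv f 1) * \<Phi>)) {-L..L}"
      using has_integral_add[OF has_integral_add[OF has_integral_mult_right[OF i\<phi>2, of "of_real d"]
              has_integral_mult_right[OF iH2, of "of_real \<alpha>"]] has_integral_mult_right[OF i\<phi>, of "of_real (deriv f 1)"]]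
      by (simp add: algebra_simps)
    moreover have "((\<lambda>x. (of_real d * \<phi>2 x + of_real \<alpha> * Hc2 x + of_real (deriv f 1) * \<phi> x) * ek L (-k) x) has_integral
          (ev * \<Phi>)) {-L..L}"
      unfolding e1 using has_integral_mult_right[OF i\<phi>, of ev] by (simp add: algebra_simps)
    ultimately have E1: "of_real d * (- complex_of_real l * \<Phi>) + of_real \<alpha> * (- complex_of_real l * (C * \<Psi>)) + of_real (deriv f 1) * \<Phi> = ev * \<Phi>"
      by (rule has_integral_unique)
    have "FC L (\<lambda>x. of_real a * \<phi> x - of_real b * \<psi> x) k = of_real a * \<Phi> - of_real b * \<Psi>"
      unfolding \<Phi>_def \<Psi>_def
      by (subst FC_diff) (auto intro!: continuous_intros continuous_on_subset[OF cp] continuous_on_subset[OF cq] simp: FC_scale)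
    moreover have "FC L (\<lambda>x. ev * \<psi> x) k = ev * \<Psi>" unfolding \<Psi>_def by (rule FC_scale)
    ultimately have E2: "of_real a * \<Phi> - of_real b * \<Psi> = ev * \<Psi>" unfolding e2 by simp
    define X where "X = (ev + complex_of_real b) * (ev + complex_of_real (d * l - deriv f 1)) + complex_of_real (\<alpha> * a * Cn L G n * l)"
    have "X * \<Phi> = - (ev + of_real b) * ((of_real d * (- complex_of_real l * \<Phi>) + of_real \<alpha> * (- complex_of_real l * (C * \<Psi>)) + of_real (deriv f 1) * \<Phi>) - ev * \<Phi>)
         + of_real \<alpha> * of_real l * C * ((of_real a * \<Phi> - of_real b * \<Psi>) - ev * \<Psi>)"
      unfolding X_def C_def by (simp add: algebra_simps)
    also have "\<dots> = 0" using E1 E2 by simp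
    finally have "X = 0" using k unfolding \<Phi>_def by simp
    then show ?thesis unfolding X_def l_def by blast
  qed
qed


lemma quad_re:
  fixes z :: complex and T c :: real
  assumes T: "T > 0" and c: "c > 0" and eq: "z * z + of_real T * z + of_real c = 0"
  shows "Re z \<le> - min (T/2) (c/T)"
proof -
  obtain x y where z: "z = Complex x y" by (cases z)
  have re: "x*x - y*y + T*x + c = 0" using arg_cong[OF eq, of Re] z by simp
  have im: "2*x*y + T*y = 0" using arg_cong[OF eq, of Im] z by (simp add: algebra_simps)
  show ?thesis
  proof (cases "y = 0")
    case True
    then have "x*T + c = - (x*x)" using re by (simp add: algebra_simps)
    then have "x*T \<le> -c" by (smt (verit) zero_le_square)
    then have "x \<le> -c/T" using T by (simp add: field_simps)
    then show ?thesis using z by simp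
  next
    case False
    then have "2*x + T = 0" using im by (metis distrib_right mult_eq_0_iff)
    then have "x = -(T/2)" by simp
    moreover have "min (T/2) (c/T) \<le> T/2" by (rule min.cobounded1)
    ultimately have "x \<le> - min (T/2) (c/T)" by linarith
    then show ?thesis using z by simp
  qed
qed

lemma stab_eps:
  fixes A Cc E :: "nat \<Rightarrow> real" and N Sp Sm :: "nat set" and \<alpha> e0 :: real
  assumes e0: "e0 > 0" and E: "\<And>n. n \<in> N \<Longrightarrow> E n \<ge> e0"
    and A: "\<And>n. n \<in> N \<Longrightarrow> Cc n \<noteq> 0 \<Longrightarrow> A n = - E n / Cc n"
    and Sp: "\<And>n. n \<in> N \<Longrightarrow> Cc n \<noteq> 0 \<Longrightarrow> A n > 0 \<Longrightarrow> n \<in> Sp"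
    and Sm: "\<And>n. n \<in> N \<Longrightarrow> Cc n \<noteq> 0 \<Longrightarrow> A n < 0 \<Longrightarrow> n \<in> Sm"
    and l: "(SUP n\<in>Sm. ereal (A n)) < ereal \<alpha>" and r: "ereal \<alpha> < (INF n\<in>Sp. ereal (A n))"
  shows "\<exists>\<epsilon>>0. \<forall>n\<in>N. E n + \<alpha> * Cc n \<ge> \<epsilon>"
proof -
  define I where "I = (INF n\<in>Sp. ereal (A n))"
  define S where "S = (SUP n\<in>Sm. ereal (A n))"
  define dp where "dp = (if \<alpha> > 0 \<and> I \<noteq> \<infinity> then 1 - \<alpha> / real_of_ereal I else 1)"
  define dm where "dm = (if \<alpha> < 0 \<and> S \<noteq> -\<infinity> then 1 - \<alpha> / real_of_ereal S else 1)"
  have r': "ereal \<alpha> < I" using r unfolding I_def .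
  have l': "S < ereal \<alpha>" using l unfolding S_def .
  have dp: "dp > 0"
  proof (cases "\<alpha> > 0 \<and> I \<noteq> \<infinity>")
    case True
    then obtain rr where rr: "I = ereal rr" using r' by (cases I) auto
    then have "\<alpha> < rr" using r' by simp
    then show ?thesis using True rr unfolding dp_def by (simp add: field_simps)
  qed (simp add: dp_def)
  have dm: "dm > 0"
  proof (cases "\<alpha> < 0 \<and> S \<noteq> -\<infinity>")
    case True
    then obtain s where s: "S = ereal s" using l' by (cases S) auto
    then have "s < \<alpha>" using l' by simp
    then have "\<alpha> / s < 1" using True by (simp add: field_simps)
    then show ?thesis using True s unfolding dm_def by simp
  qed (simp add: dm_def)
  define \<epsilon> where "\<epsilon> = e0 * min 1 (min dp dm)"
  have "\<epsilon> > 0" unfolding \<epsilon>_def using e0 dp dm by simp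
  moreover have "E n + \<alpha> * Cc n \<ge> \<epsilon>" if n: "n \<in> N" for n
  proof (cases "\<alpha> * Cc n \<ge> 0")
    case True
    have "\<epsilon> \<le> e0" unfolding \<epsilon>_def using e0 by (simp add: mult_left_le)
    then show ?thesis using E[OF n] True by linarith
  next
    case False
    then have Cnz: "Cc n \<noteq> 0" and anz: "\<alpha> \<noteq> 0" by auto
    have En: "E n > 0" using E[OF n] e0 by linarith
    have An: "A n = - E n / Cc n" using A[OF n Cnz] .
    have key: "E n + \<alpha> * Cc n = E n * (1 - \<alpha> / A n)"
      unfolding An using Cnz En by (simp add: field_simps)
    show ?thesis
    proof (cases "\<alpha> > 0")
      case True
      then have "Cc n < 0" using False by (simp add: mult_less_0_iff not_le)
      then have "E n / Cc n < 0" using En by (simp add: divide_pos_neg)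
      then have Apos: "A n > 0" using An by simp
      then have "n \<in> Sp" using Sp[OF n Cnz] by simp
      then have IA: "I \<le> ereal (A n)" unfolding I_def by (rule INF_lower)
      then have "I \<noteq> \<infinity>" by auto
      then obtain rr where rr: "I = ereal rr" using r' by (cases I) auto
      have "\<alpha> < rr" using r' rr by simp
      have "rr \<le> A n" using IA rr by simp
      have dpv: "dp = 1 - \<alpha> / rr" unfolding dp_def using True rr by simp
      have "\<alpha> / A n \<le> \<alpha> / rr"
        using \<open>rr \<le> A n\<close> \<open>\<alpha> < rr\<close> True by (intro divide_left_mono) auto
      then have "1 - \<alpha> / A n \<ge> dp" using dpv by simp
      then have "E n * (1 - \<alpha> / A n) \<ge> e0 * dp"
        using E[OF n] dp e0 by (intro mult_mono) auto
      moreover have "\<epsilon> \<le> e0 * dp" unfolding \<epsilon>_def using e0 by (intro mult_left_mono) auto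
      ultimately show ?thesis using key by linarith
    next
      case False2: False
      then have neg: "\<alpha> < 0" using anz by simp
      then have "Cc n > 0" using False by (simp add: mult_less_0_iff not_le)
      then have Aneg: "A n < 0" using An En by simp
      then have "n \<in> Sm" using Sm[OF n Cnz] by simp
      then have SA: "ereal (A n) \<le> S" unfolding S_def by (rule SUP_upper)
      then have "S \<noteq> -\<infinity>" by auto
      then obtain s where s: "S = ereal s" using l' by (cases S) auto
      have "s < \<alpha>" using l' s by simp
      have "A n \<le> s" using SA s by simp
      have dmv: "dm = 1 - \<alpha> / s" unfolding dm_def using neg s by simp
      have "\<alpha> / A n \<le> \<alpha> / s"
      proof -
        have "(-\<alpha>) / (- A n) \<le> (-\<alpha>) / (- s)"
        proof (rule divide_left_mono)
          show "- s \<le> - A n" using \<open>A n \<le> s\<close> by simp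
          show "0 \<le> - \<alpha>" using neg by simp
          have "s < 0" using \<open>s < \<alpha>\<close> neg by simp
          then show "0 < - A n * - s" using Aneg by (simp add: mult_neg_neg)
        qed
        then show ?thesis by simp
      qed
      then have "1 - \<alpha> / A n \<ge> dm" using dmv by simp
      then have "E n * (1 - \<alpha> / A n) \<ge> e0 * dm"
        using E[OF n] dm e0 by (intro mult_mono) auto
      moreover have "\<epsilon> \<le> e0 * dm" unfolding \<epsilon>_def using e0 by (intro mult_left_mono) auto
      ultimately show ?thesis using key by linarith
    qed
  qed
  ultimately show ?thesis by blast
qed

lemma unstab_neg:
  fixes A Cc E :: "nat \<Rightarrow> real" and N Sp Sm :: "nat set" and \<alpha> :: real
  assumes E: "\<And>n. n \<in> N \<Longrightarrow> E n > 0"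
    and A: "\<And>n. n \<in> N \<Longrightarrow> Cc n \<noteq> 0 \<Longrightarrow> A n = - E n / Cc n"
    and Sp: "\<And>n. n \<in> Sp \<Longrightarrow> n \<in> N \<and> Cc n \<noteq> 0 \<and> A n > 0"
    and Sm: "\<And>n. n \<in> Sm \<Longrightarrow> n \<in> N \<and> Cc n \<noteq> 0 \<and> A n < 0"
    and lr: "ereal \<alpha> < (SUP n\<in>Sm. ereal (A n)) \<or> (INF n\<in>Sp. ereal (A n)) < ereal \<alpha>"
  shows "\<exists>n\<in>N. E n + \<alpha> * Cc n < 0"
proof -
  obtain n where n: "n \<in> Sm \<and> \<alpha> < A n \<or> n \<in> Sp \<and> A n < \<alpha>"
    using lr unfolding less_SUP_iff INF_less_iff by auto
  then have nN: "n \<in> N" and Cnz: "Cc n \<noteq> 0" using Sp Sm by auto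
  have En: "E n > 0" using E[OF nN] .
  have An: "A n = - E n / Cc n" using A[OF nN Cnz] .
  have key: "E n + \<alpha> * Cc n = E n * (1 - \<alpha> / A n)"
    unfolding An using Cnz En by (simp add: field_simps)
  have "\<alpha> / A n > 1"
    using n Sp Sm by (auto simp: field_simps)
  then have "E n + \<alpha> * Cc n < 0" unfolding key using En by (simp add: mult_pos_neg)
  then show ?thesis using nN by blast
qed


lemma unstable_mode:
  assumes L: "L > 0" and H0: "H0 L G" and bpos: "g 1 + \<mu> + \<beta> > 0"
    and cneg: "(g 1 + \<mu> + \<beta>) * (d * lam L n - deriv f 1)
       + \<alpha> * (deriv g 1 * (\<kappa> - kstar (g 1) \<kappa> \<mu> \<beta>) - \<beta> * kstar (g 1) \<kappa> \<mu> \<beta>) * Cn L G n * lam L n < 0"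
  shows "lin_unstable L d \<alpha> \<mu> \<beta> \<kappa> G f g"
proof -
  define b where "b = g 1 + \<mu> + \<beta>"
  define ks where "ks = kstar (g 1) \<kappa> \<mu> \<beta>"
  define a where "a = deriv g 1 * (\<kappa> - ks) - \<beta> * ks"
  define l where "l = lam L n"
  define F1 where "F1 = deriv f 1"
  define Cv where "Cv = Cn L G n"
  define T where "T = b + d*l - F1"
  define c where "c = b*(d*l - F1) + \<alpha>*a*Cv*l"
  have c: "c < 0" using cneg unfolding c_def b_def a_def ks_def l_def F1_def Cv_def by simp
  have b: "b > 0" using bpos unfolding b_def .
  define s where "s = sqrt (T*T - 4*c)"
  have nn: "T*T - 4*c \<ge> 0" using c zero_le_square[of T] by linarith
  have sq: "s * s = T*T - 4*c" unfolding s_def using nn by simp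
  have "sqrt (T*T) < s" unfolding s_def using c by (intro real_sqrt_less_mono) simp
  then have sT: "T < s" by (metis abs_ge_self order.strict_trans1 real_sqrt_abs2 power2_eq_square)
  define r where "r = (s - T) / 2"
  have rpos: "r > 0" unfolding r_def using sT by simp
  have req: "r*r + T*r + c = 0" unfolding r_def using sq by (simp add: field_simps)
  have rb: "r + b > 0" using rpos b by simp
  define P where "P = a / (r + b)"
  have R1: "d*(-l) + \<alpha>*(P*Cv)*(-l) + F1 = r"
  proof -
    have "(r + b) * (d*(-l) + \<alpha>*(P*Cv)*(-l) + F1 - r) = - (r*r + T*r + c)"
      unfolding P_def T_def c_def using rb by (simp add: field_simps)
    then have "(r + b) * (d*(-l) + \<alpha>*(P*Cv)*(-l) + F1 - r) = 0" using req by simp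
    then show ?thesis using rb by simp
  qed
  have R2: "a - b*P = r*P" unfolding P_def using rb by (simp add: field_simps)
  define e where "e = ek L (int n)"
  define w where "w = wk L (int n)"
  have ww: "w * w = - complex_of_real l" unfolding w_def l_def using lam_wk[of L "int n"] by simp
  define \<phi> where "\<phi> = e"
  define \<phi>1 where "\<phi>1 = (\<lambda>x. w * e x)"
  define \<phi>2 where "\<phi>2 = (\<lambda>x. w * (w * e x))"
  define \<psi> where "\<psi> = (\<lambda>x. complex_of_real P * e x)"
  define K where "K = complex_of_real P * complex_of_real Cv"
  define Hc1 where "Hc1 = (\<lambda>x. K * (w * e x))"
  define Hc2 where "Hc2 = (\<lambda>x. K * (w * (w * e x)))"
  have de: "(e has_vector_derivative w * e x) (at x)" for x
    unfolding e_def w_def using ek_deriv[of L "int n" x UNIV] by simp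
  have convq: "conv L G \<psi> = (\<lambda>x. K * e x)"
    unfolding \<psi>_def K_def e_def
    by (rule ext) (simp add: conv_scale conv_ek[OF L H0] Cv_def)
  have ex: "\<exists>\<phi> \<phi>1 \<phi>2 \<psi> Hc1 Hc2.
        (\<phi> \<noteq> (\<lambda>_. 0) \<or> \<psi> \<noteq> (\<lambda>_. 0)) \<and> periodic L \<phi> \<and> periodic L \<psi> \<and>
        continuous_on UNIV \<psi> \<and>
        (\<forall>x. (\<phi> has_vector_derivative \<phi>1 x) (at x)) \<and>
        (\<forall>x. (\<phi>1 has_vector_derivative \<phi>2 x) (at x)) \<and>
        (\<forall>x. (conv L G \<psi> has_vector_derivative Hc1 x) (at x)) \<and>
        (\<forall>x. (Hc1 has_vector_derivative Hc2 x) (at x)) \<and>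
        (\<forall>x. of_real d * \<phi>2 x + of_real \<alpha> * Hc2 x + of_real (deriv f 1) * \<phi> x = complex_of_real r * \<phi> x) \<and>
        (\<forall>x. of_real (deriv g 1 * (\<kappa> - ks) - \<beta> * ks) * \<phi> x
               - of_real (g 1 + \<mu> + \<beta>) * \<psi> x = complex_of_real r * \<psi> x)"
  proof (rule exI[of _ \<phi>], rule exI[of _ \<phi>1], rule exI[of _ \<phi>2], rule exI[of _ \<psi>], rule exI[of _ Hc1], rule exI[of _ Hc2], intro conjI allI)
    show "\<phi> \<noteq> (\<lambda>_. 0) \<or> \<psi> \<noteq> (\<lambda>_. 0)"
      unfolding \<phi>_def e_def by (metis ek_nz)
    show "periodic L \<phi>" unfolding periodic_def \<phi>_def e_def using ek_periodic L by simp
    show "periodic L \<psi>" unfolding periodic_def \<psi>_def e_def using ek_periodic L by simp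
    show "continuous_on UNIV \<psi>" unfolding \<psi>_def e_def by (intro continuous_intros)
    fix x
    show "(\<phi> has_vector_derivative \<phi>1 x) (at x)" unfolding \<phi>_def \<phi>1_def by (rule de)
    show "(\<phi>1 has_vector_derivative \<phi>2 x) (at x)" unfolding \<phi>1_def \<phi>2_def
      by (rule has_vector_derivative_mult_right[OF de])
    show "(conv L G \<psi> has_vector_derivative Hc1 x) (at x)" unfolding convq Hc1_def
      by (rule has_vector_derivative_mult_right[OF de])
    show "(Hc1 has_vector_derivative Hc2 x) (at x)" unfolding Hc1_def Hc2_def
      by (intro has_vector_derivative_mult_right de)
    have "of_real d * \<phi>2 x + of_real \<alpha> * Hc2 x + of_real (deriv f 1) * \<phi> x
        = complex_of_real (d*(-l) + \<alpha>*(P*Cv)*(-l) + F1) * e x"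
      unfolding \<phi>2_def Hc2_def \<phi>_def K_def F1_def
      by (simp add: mult.assoc[symmetric] ww) (simp add: algebra_simps)
    then show "of_real d * \<phi>2 x + of_real \<alpha> * Hc2 x + of_real (deriv f 1) * \<phi> x = complex_of_real r * \<phi> x"
      unfolding R1 \<phi>_def .
    have "of_real (deriv g 1 * (\<kappa> - ks) - \<beta> * ks) * \<phi> x - of_real (g 1 + \<mu> + \<beta>) * \<psi> x
        = complex_of_real (a - b*P) * e x"
      unfolding \<phi>_def \<psi>_def a_def b_def by (simp add: algebra_simps)
    then show "of_real (deriv g 1 * (\<kappa> - ks) - \<beta> * ks) * \<phi> x - of_real (g 1 + \<mu> + \<beta>) * \<psi> x
        = complex_of_real r * \<psi> x"
      unfolding R2 \<psi>_def by simp
  qed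
  have "lin_eigenvalue L d \<alpha> \<mu> \<beta> \<kappa> G f g (complex_of_real r)"
    unfolding lin_eigenvalue_def Let_def ks_def[symmetric] using ex .
  then show ?thesis unfolding lin_unstable_def using rpos by force
qed


theorem theorem1p4:
  fixes L d \<alpha> \<mu> \<beta> \<kappa> \<rho> :: real and G f g :: "real \<Rightarrow> real"
  assumes "L > 0" and "d > 0" and "\<mu> \<ge> 0" and "\<beta> \<ge> 0" and "\<kappa> > 0"
    and "H0 L G" and "H1 f" and "H2 g \<rho>"
    and "deriv g 1 * (\<mu> + \<beta>) - \<beta> * \<rho> \<noteq> 0"
  shows "(alpha_l L d \<mu> \<beta> \<kappa> \<rho> G f g < ereal \<alpha> \<and> ereal \<alpha> < alpha_r L d \<mu> \<beta> \<kappa> \<rho> G f g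
            \<longrightarrow> lin_stable L d \<alpha> \<mu> \<beta> \<kappa> G f g)
       \<and> (ereal \<alpha> < alpha_l L d \<mu> \<beta> \<kappa> \<rho> G f g \<or> ereal \<alpha> > alpha_r L d \<mu> \<beta> \<kappa> \<rho> G f g
            \<longrightarrow> lin_unstable L d \<alpha> \<mu> \<beta> \<kappa> G f g)"
proof -
  note L = assms(1) and dpos = assms(2) and mu = assms(3) and be = assms(4) and ka = assms(5)
    and H0 = assms(6) and Dnz = assms(9)
  have g1: "g 1 = \<rho>" and rho: "\<rho> > 0" using assms(8) unfolding H2_def by auto
  have F1: "deriv f 1 < 0" using assms(7) unfolding H1_def by auto
  define b where "b = g 1 + \<mu> + \<beta>"
  have b: "b > 0" unfolding b_def using g1 rho mu be by simp
  define ks where "ks = kstar (g 1) \<kappa> \<mu> \<beta>"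
  define a where "a = deriv g 1 * (\<kappa> - ks) - \<beta> * ks"
  define D where "D = deriv g 1 * (\<mu> + \<beta>) - \<beta> * \<rho>"
  define F where "F = deriv f 1"
  have Fneg: "F < 0" unfolding F_def using F1 .
  have ksb: "ks * b = \<rho> * \<kappa>" unfolding ks_def kstar_def b_def using b g1 unfolding b_def by simp
  have ab: "a * b = \<kappa> * D"
  proof -
    have "a * b = deriv g 1 * (\<kappa> * b - ks * b) - \<beta> * (ks * b)" unfolding a_def by (simp add: algebra_simps)
    also have "\<dots> = deriv g 1 * (\<kappa> * b - \<rho> * \<kappa>) - \<beta> * (\<rho> * \<kappa>)" by (simp only: ksb)
    also have "\<dots> = \<kappa> * D" unfolding D_def b_def g1 by (simp add: algebra_simps)
    finally show ?thesis .
  qed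
  have anz: "a \<noteq> 0" using ab ka Dnz b unfolding D_def by auto
  define l where "l n = lam L n" for n
  have lpos: "l n > 0" if "n \<ge> 1" for n using that L unfolding l_def lam_def by simp
  have l0: "l 0 = 0" unfolding l_def lam_def by simp
  have lmono: "l n \<ge> l 1" if "n \<ge> 1" for n
  proof -
    have "(1::real) \<le> (real n)^2" using that by simp
    then show ?thesis unfolding l_def lam_def using L by (simp add: divide_right_mono)
  qed
  define E where "E n = b * (d - F / l n)" for n
  define Cc where "Cc n = a * Cn L G n" for n
  define A where "A n = alpha_hat L d \<mu> \<beta> \<kappa> \<rho> G f g n" for n
  define N where "N = {n::nat. n \<ge> 1}"
  have En: "E n \<ge> b * d" if "n \<in> N" for n
  proof -
    have "F / l n \<le> 0" using Fneg lpos[of n] that unfolding N_def by (simp add: divide_nonpos_pos)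
    then show ?thesis unfolding E_def using b by (simp add: mult_left_mono)
  qed
  have Epos: "E n > 0" if "n \<in> N" for n using En[OF that] b dpos by (smt (verit) mult_pos_pos)
  have Ahat: "A n = - E n / Cc n" if "n \<in> N" "Cc n \<noteq> 0" for n
  proof -
    have Cnz: "Cn L G n \<noteq> 0" using that unfolding Cc_def by simp
    have rb: "\<rho> + \<mu> + \<beta> = b" unfolding b_def g1 ..
    have kD: "\<kappa> * D = a * b" using ab by simp
    show ?thesis unfolding A_def alpha_hat_def E_def Cc_def rb D_def[symmetric] kD F_def[symmetric] l_def[symmetric]
      using Cnz anz b by (simp add: field_simps power2_eq_square)
  qed
  have Cc_iff: "Cc n \<noteq> 0 \<longleftrightarrow> Cn L G n \<noteq> 0" for n unfolding Cc_def using anz by simp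
  have cform: "b * (d * l n - F) + \<alpha> * a * Cn L G n * l n = l n * (E n + \<alpha> * Cc n)" if "n \<in> N" for n
    unfolding E_def Cc_def using lpos[of n] that unfolding N_def by (simp add: field_simps)
  have Sp: "Sigma_plus L d \<mu> \<beta> \<kappa> \<rho> G f g = {n. n \<in> N \<and> Cc n \<noteq> 0 \<and> A n > 0}"
    unfolding Sigma_plus_def N_def A_def Cc_iff by auto
  have Sm: "Sigma_minus L d \<mu> \<beta> \<kappa> \<rho> G f g = {n. n \<in> N \<and> Cc n \<noteq> 0 \<and> A n < 0}"
    unfolding Sigma_minus_def N_def A_def Cc_iff by auto
  have ar: "alpha_r L d \<mu> \<beta> \<kappa> \<rho> G f g = (INF n\<in>{n. n \<in> N \<and> Cc n \<noteq> 0 \<and> A n > 0}. ereal (A n))"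
    unfolding alpha_r_def Sp A_def ..
  have al: "alpha_l L d \<mu> \<beta> \<kappa> \<rho> G f g = (SUP n\<in>{n. n \<in> N \<and> Cc n \<noteq> 0 \<and> A n < 0}. ereal (A n))"
    unfolding alpha_l_def Sm A_def ..
  have bg: "g 1 + \<mu> + \<beta> = b" unfolding b_def ..
  show ?thesis
  proof (intro conjI impI)
    assume asm: "alpha_l L d \<mu> \<beta> \<kappa> \<rho> G f g < ereal \<alpha> \<and> ereal \<alpha> < alpha_r L d \<mu> \<beta> \<kappa> \<rho> G f g"
    obtain \<epsilon> where \<epsilon>: "\<epsilon> > 0" "\<And>n. n \<in> N \<Longrightarrow> E n + \<alpha> * Cc n \<ge> \<epsilon>"
      using stab_eps[of "b*d" N E Cc A "{n. n \<in> N \<and> Cc n \<noteq> 0 \<and> A n > 0}" "{n. n \<in> N \<and> Cc n \<noteq> 0 \<and> A n < 0}" \<alpha>]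
        asm b dpos En Ahat unfolding ar al by auto
    define m0 where "m0 = (- b * F) / (b - F)"
    define m1 where "m1 = \<epsilon> * l 1 / (b - F + d * l 1)"
    define \<omega> where "\<omega> = min (b/2) (min m0 m1)"
    have l1: "l 1 > 0" using lpos[of 1] by simp
    have m0: "m0 > 0" unfolding m0_def using b Fneg
      by (intro divide_pos_pos) (simp_all add: mult_pos_neg)
    have m1: "m1 > 0" unfolding m1_def using \<epsilon>(1) l1 b Fneg dpos
      by (intro divide_pos_pos mult_pos_pos) (auto intro: add_pos_pos)
    have \<omega>: "\<omega> > 0" unfolding \<omega>_def using b m0 m1 by simp
    show "lin_stable L d \<alpha> \<mu> \<beta> \<kappa> G f g"
      unfolding lin_stable_def
    proof (intro exI[of _ \<omega>] conjI allI impI \<omega>)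
      fix ev assume ev: "lin_eigenvalue L d \<alpha> \<mu> \<beta> \<kappa> G f g ev"
      from eigen_disp[OF L H0 ev]
      have "ev = - complex_of_real b \<or> (\<exists>n. (ev + complex_of_real b) * (ev + complex_of_real (d * l n - F))
            + complex_of_real (\<alpha> * a * Cn L G n * l n) = 0)"
        unfolding b_def a_def ks_def l_def F_def .
      then show "Re ev \<le> - \<omega>"
      proof
        assume "ev = - complex_of_real b"
        then show ?thesis unfolding \<omega>_def using b by simp
      next
        assume "\<exists>n. (ev + complex_of_real b) * (ev + complex_of_real (d * l n - F))
            + complex_of_real (\<alpha> * a * Cn L G n * l n) = 0"
        then obtain n where n: "(ev + complex_of_real b) * (ev + complex_of_real (d * l n - F))
            + complex_of_real (\<alpha> * a * Cn L G n * l n) = 0" by blast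
        define T where "T = b + d * l n - F"
        define c where "c = b * (d * l n - F) + \<alpha> * a * Cn L G n * l n"
        have quad: "ev * ev + of_real T * ev + of_real c = 0"
          using n unfolding T_def c_def by (simp add: algebra_simps)
        have lnn: "l n \<ge> 0" using lpos[of n] l0 by (cases "n = 0") auto
        have TF: "T \<ge> b - F" unfolding T_def using lnn dpos by simp
        have T: "T > 0" using TF b Fneg by linarith
        show ?thesis
        proof (cases "n = 0")
          case True
          have c: "c = - b * F" unfolding c_def True l0 by simp
          have Tv: "T = b - F" unfolding T_def True l0 by simp
          have cpos: "c > 0" unfolding c using b Fneg by (simp add: mult_pos_neg)
          have "Re ev \<le> - min (T/2) (c/T)" by (rule quad_re[OF T cpos quad])
          moreover have "\<omega> \<le> min (T/2) (c/T)"
          proof -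
            have "\<omega> \<le> b/2" "\<omega> \<le> m0" unfolding \<omega>_def by auto
            moreover have "b/2 \<le> T/2" using Tv Fneg by simp
            moreover have "m0 = c/T" unfolding m0_def Tv c ..
            ultimately show ?thesis by simp
          qed
          ultimately show ?thesis by linarith
        next
          case False
          then have nN: "n \<in> N" unfolding N_def by simp
          have cl: "c = l n * (E n + \<alpha> * Cc n)" unfolding c_def using cform[OF nN] by simp
          have cge: "c \<ge> l n * \<epsilon>" unfolding cl using \<epsilon>(2)[OF nN] lpos[of n] nN unfolding N_def
            by (intro mult_left_mono) auto
          have lne: "l n * \<epsilon> > 0" using lpos[of n] \<epsilon>(1) nN unfolding N_def by simp
          have cpos: "c > 0" using cge lne by linarith
          have "Re ev \<le> - min (T/2) (c/T)" by (rule quad_re[OF T cpos quad])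
          moreover have "\<omega> \<le> T/2" unfolding \<omega>_def using TF Fneg by simp
          moreover have "\<omega> \<le> c/T"
          proof -
            have "m1 \<le> l n * \<epsilon> / T"
            proof -
              have ln1: "l n \<ge> l 1" using lmono nN unfolding N_def by simp
              have "\<epsilon> * l 1 * T \<le> l n * \<epsilon> * (b - F + d * l 1)"
              proof -
                have "\<epsilon> * l 1 * T = \<epsilon> * (l 1 * (b - F)) + \<epsilon> * d * (l 1 * l n)" unfolding T_def by (simp add: algebra_simps)
                also have "\<dots> \<le> \<epsilon> * (l n * (b - F)) + \<epsilon> * d * (l 1 * l n)"
                  using ln1 b Fneg \<epsilon>(1) by (intro add_right_mono mult_left_mono mult_right_mono) auto
                also have "\<dots> = l n * \<epsilon> * (b - F + d * l 1)" by (simp add: algebra_simps)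
                finally show ?thesis .
              qed
              moreover have B: "b - F + d * l 1 > 0" using b Fneg dpos l1 by (smt (verit) mult_pos_pos)
              ultimately have "\<epsilon> * l 1 \<le> l n * \<epsilon> * (b - F + d * l 1) / T"
                using T by (simp add: pos_le_divide_eq)
              also have "\<dots> = (l n * \<epsilon> / T) * (b - F + d * l 1)" by simp
              finally show ?thesis unfolding m1_def by (rule mult_imp_div_pos_le[OF B])
            qed
            also have "\<dots> \<le> c / T" using cge T by (simp add: divide_right_mono)
            finally show ?thesis unfolding \<omega>_def by simp
          qed
          ultimately show ?thesis by linarith
        qed
      qed
    qed
  next
    assume asm: "ereal \<alpha> < alpha_l L d \<mu> \<beta> \<kappa> \<rho> G f g \<or> alpha_r L d \<mu> \<beta> \<kappa> \<rho> G f g < ereal \<alpha>"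
    have lr: "ereal \<alpha> < (SUP n\<in>{n. n \<in> N \<and> Cc n \<noteq> 0 \<and> A n < 0}. ereal (A n))
       \<or> (INF n\<in>{n. n \<in> N \<and> Cc n \<noteq> 0 \<and> A n > 0}. ereal (A n)) < ereal \<alpha>"
      using asm unfolding ar al .
    have "\<exists>n\<in>N. E n + \<alpha> * Cc n < 0"
      by (rule unstab_neg[of N E Cc A "{n. n \<in> N \<and> Cc n \<noteq> 0 \<and> A n > 0}" "{n. n \<in> N \<and> Cc n \<noteq> 0 \<and> A n < 0}" \<alpha>,
            OF Epos Ahat _ _ lr]) simp_all
    then obtain n where nN: "n \<in> N" and neg: "E n + \<alpha> * Cc n < 0" by blast
    have lnp: "l n > 0" using lpos[of n] nN unfolding N_def by simp
    have "l n * (E n + \<alpha> * Cc n) < 0" using neg lnp by (simp add: mult_pos_neg)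
    then have cn: "b * (d * l n - F) + \<alpha> * a * Cn L G n * l n < 0" using cform[OF nN] by simp
    have bpos: "g 1 + \<mu> + \<beta> > 0" using b unfolding b_def .
    show "lin_unstable L d \<alpha> \<mu> \<beta> \<kappa> G f g"
      by (rule unstable_mode[where L=L and G=G and g=g and \<mu>=\<mu> and \<beta>=\<beta> and d=d and n=n and f=f and \<alpha>=\<alpha> and \<kappa>=\<kappa>, OF L H0 bpos]) (use cn in \<open>simp only: b_def a_def ks_def l_def F_def\<close>)
  qed
qed


end
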